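(* Let $c=0.3$, $a=\sqrt{1+c^2}$, $$\gamma_{AB}=\begin{pmatrix}a&0&c&0\\0&a&0&-c\\c&0&a&0\\0&-c&0&a\end{pmatrix},\qquad \gamma=\gamma_{AB}\oplus\mathbb{1}_2,$$ $\tilde p_1=(0,1,0,1,1,2)^T$, $\tilde p_2=(1,0,-1,0,0,1)^T$, and for $a_1,a_2\ge0$ let $\gamma_{a_1,a_2}=\gamma+a_1\tilde p_1\tilde p_1^T+a_2\tilde p_2\tilde p_2^T$. Then for no $a_1,a_2\ge0$ is $\gamma_{a_1,a_2}$ fully separable; in particular, every $\gamma_{a_1,a_2}$ that satisfies $\gamma_{a_1,a_2}\ge i\tilde J_x$ for all $x\in\{0,A,B,C\}$ is a PPT entangled (Class 4) CM.
   Context: Conventions: Three modes $A,B,C$, phase-space vectors ordered mode-wise as $(q_A,p_A,q_B,p_B,q_C,p_C)$. $J_1=\begin{pmatrix}0&-1\\1&0\end{pmatrix}$, $J=J_1\oplus J_1\oplus J_1$. A CM of $n$ modes is a real symmetric $2n\times2n$ matrix $\gamma>0$ with $\gamma-iJ\ge0$; $X\ge Y$ means $X-Y$ is positive semidefinite. For $x\in\{A,B,C\}$, $\tilde J_x$ is $J$ with the $2\times2$ diagonal block of mode $x$ replaced by $-J_1$, and $\tilde J_0=J$. A three-mode CM is fully separable if there exist one-mode CMs $\gamma_A,\gamma_B,\gamma_C$ with $\gamma\ge\gamma_A\oplus\gamma_B\oplus\gamma_C$; it is separable with respect to the bipartition $x$–$yz$ if there exist a one-mode CM $\gamma_x$ and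 a two-mode CM $\gamma_{yz}$ with $\gamma\ge\gamma_x\oplus\gamma_{yz}$; Class 4 means separable with respect to all three bipartitions but not fully separable. *)

theory Defs
  imports Complex_Main
begin

text \<open>Matrices are represented as functions on indices; an n x n matrix only uses
  entries with indices in {0..<n}. Phase-space ordering is mode-wise
  (q_A,p_A,q_B,p_B,q_C,p_C), indices 0..5; mode m occupies indices 2m, 2m+1.\<close>

type_synonym rmat = "nat \<Rightarrow> nat \<Rightarrow> real"
type_synonym cmat = "nat \<Rightarrow> nat \<Rightarrow> complex"

definition rsym :: "nat \<Rightarrow> rmat \<Rightarrow> bool" where
  "rsym n M \<longleftrightarrow> (\<forall>i<n. \<forall>j<n. M i j = M j i)"

definition psd_r :: "nat \<Rightarrow> rmat \<Rightarrow> bool" where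
  "psd_r n M \<longleftrightarrow> (\<forall>v :: nat \<Rightarrow> real. 0 \<le> (\<Sum>i<n. \<Sum>j<n. v i * M i j * v j))"

definition pd_r :: "nat \<Rightarrow> rmat \<Rightarrow> bool" where
  "pd_r n M \<longleftrightarrow> (\<forall>v :: nat \<Rightarrow> real. (\<exists>i<n. v i \<noteq> 0) \<longrightarrow>
      0 < (\<Sum>i<n. \<Sum>j<n. v i * M i j * v j))"

definition psd_c :: "nat \<Rightarrow> cmat \<Rightarrow> bool" where
  "psd_c n M \<longleftrightarrow> (\<forall>v :: nat \<Rightarrow> complex.
      Im (\<Sum>i<n. \<Sum>j<n. cnj (v i) * M i j * v j) = 0 \<and>
      0 \<le> Re (\<Sum>i<n. \<Sum>j<n. cnj (v i) * M i j * v j))"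

definition J1 :: rmat where
  "J1 i j = (if i = 0 \<and> j = 1 then -1 else if i = 1 \<and> j = 0 then 1 else 0)"

definition Jsym :: rmat where
  "Jsym i j = (if i div 2 = j div 2 then J1 (i mod 2) (j mod 2) else 0)"

text \<open>\<tilde>J_x for mode x (0 = A, 1 = B, 2 = C): block of mode x replaced by -J_1.\<close>
definition Jtilde :: "nat \<Rightarrow> rmat" where
  "Jtilde x i j = (if i div 2 = x \<and> j div 2 = x then - Jsym i j else Jsym i j)"

definition ge_iK :: "nat \<Rightarrow> rmat \<Rightarrow> rmat \<Rightarrow> bool" where
  "ge_iK n X K \<longleftrightarrow> psd_c n (\<lambda>i j. complex_of_real (X i j) - \<i> * complex_of_real (K i j))"

definition CM :: "nat \<Rightarrow> rmat \<Rightarrow> bool" where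
  "CM n g \<longleftrightarrow> rsym (2*n) g \<and> pd_r (2*n) g \<and> ge_iK (2*n) g Jsym"

definition fully_sep :: "rmat \<Rightarrow> bool" where
  "fully_sep g \<longleftrightarrow> (\<exists>gs :: nat \<Rightarrow> rmat. (\<forall>m<3. CM 1 (gs m)) \<and>
     psd_r 6 (\<lambda>i j. g i j - (if i div 2 = j div 2 then gs (i div 2) (i mod 2) (j mod 2) else 0)))"

text \<open>Index of a phase-space coordinate i (of a mode different from x) inside the
  two-mode system of the remaining modes y < z.\<close>
definition rest_idx :: "nat \<Rightarrow> nat \<Rightarrow> nat" where
  "rest_idx x i = 2 * (if i div 2 < x then i div 2 else i div 2 - 1) + i mod 2"

text \<open>\<gamma>_x \<oplus> \<gamma>_yz embedded in the mode-wise ordering (A,B,C).\<close>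
definition embed_bip :: "nat \<Rightarrow> rmat \<Rightarrow> rmat \<Rightarrow> rmat" where
  "embed_bip x g1 g2 i j =
     (if i div 2 = x \<and> j div 2 = x then g1 (i mod 2) (j mod 2)
      else if i div 2 \<noteq> x \<and> j div 2 \<noteq> x then g2 (rest_idx x i) (rest_idx x j)
      else 0)"

definition bisep :: "nat \<Rightarrow> rmat \<Rightarrow> bool" where
  "bisep x g \<longleftrightarrow> (\<exists>g1 g2. CM 1 g1 \<and> CM 2 g2 \<and>
     psd_r 6 (\<lambda>i j. g i j - embed_bip x g1 g2 i j))"

definition class4 :: "rmat \<Rightarrow> bool" where
  "class4 g \<longleftrightarrow> CM 3 g \<and> (\<forall>x<3. bisep x g) \<and> \<not> fully_sep g"

definition cc :: real where "cc = 3/10"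
definition aa :: real where "aa = sqrt (1 + cc^2)"

definition gam0 :: rmat where
  "gam0 i j =
     (if i = j then (if i < 4 then aa else if i < 6 then 1 else 0)
      else if (i = 0 \<and> j = 2) \<or> (i = 2 \<and> j = 0) then cc
      else if (i = 1 \<and> j = 3) \<or> (i = 3 \<and> j = 1) then - cc
      else 0)"

definition pt1 :: "real list" where "pt1 = [0, 1, 0, 1, 1, 2]"
definition pt2 :: "real list" where "pt2 = [1, 0, -1, 0, 0, 1]"

definition gam :: "real \<Rightarrow> real \<Rightarrow> rmat" where
  "gam a1 a2 i j = gam0 i j + a1 * (pt1 ! i) * (pt1 ! j) + a2 * (pt2 ! i) * (pt2 ! j)"

end

theory Submission
  imports Defs
begin

definition qf :: "nat \<Rightarrow> rmat \<Rightarrow> (nat \<Rightarrow> real) \<Rightarrow> (nat \<Rightarrow> real) \<Rightarrow> real" where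
  "qf n M x y = (\<Sum>i<n. \<Sum>j<n. x i * M i j * y j)"

lemma ReIm_term:
  "Re (cnj (Complex x1 y1) * (complex_of_real g - \<i> * complex_of_real k) * Complex x2 y2)
     = x1 * g * x2 + y1 * g * y2 + x1 * k * y2 - y1 * k * x2"
  "Im (cnj (Complex x1 y1) * (complex_of_real g - \<i> * complex_of_real k) * Complex x2 y2)
     = x1 * g * y2 - y1 * g * x2 - x1 * k * x2 - y1 * k * y2"
  by (simp_all add: algebra_simps)

lemma ReIm_term2:
  "Re (cnj u * (complex_of_real g - \<i> * complex_of_real k) * w)
     = Re u * g * Re w + Im u * g * Im w + Re u * k * Im w - Im u * k * Re w"
  "Im (cnj u * (complex_of_real g - \<i> * complex_of_real k) * w)
     = Re u * g * Im w - Im u * g * Re w - Re u * k * Re w - Im u * k * Im w"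
  by (simp_all add: algebra_simps)

lemma qf_swap_sym:
  assumes sym: "\<And>i j. i < n \<Longrightarrow> j < n \<Longrightarrow> G i j = G j i"
  shows "qf n G x y = qf n G y x"
proof -
  have "qf n G x y = (\<Sum>j<n. \<Sum>i<n. x i * G i j * y j)" unfolding qf_def by (rule sum.swap)
  also have "\<dots> = qf n G y x" unfolding qf_def
    apply (intro sum.cong refl)
    subgoal for j i using sym[of i j] by (simp add: mult_ac)
    done
  finally show ?thesis .
qed

lemma qf_asym_zero:
  assumes asym: "\<And>i j. i < n \<Longrightarrow> j < n \<Longrightarrow> K i j = - K j i"
  shows "qf n K x x = 0"
proof -
  have "qf n K x x = (\<Sum>j<n. \<Sum>i<n. x i * K i j * x j)" unfolding qf_def by (rule sum.swap)
  also have "\<dots> = (\<Sum>j<n. \<Sum>i<n. - (x j * K j i * x i))"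
    apply (intro sum.cong refl)
    subgoal for j i using asym[of i j] by (simp add: mult_ac)
    done
  also have "\<dots> = - qf n K x x" unfolding qf_def by (simp add: sum_negf)
  finally show ?thesis by simp
qed

lemma psd_c_imp_real:
  assumes "psd_c n (\<lambda>i j. complex_of_real (G i j) - \<i> * complex_of_real (K i j))"
  shows "0 \<le> qf n G x x + qf n G y y + qf n K x y - qf n K y x"
proof -
  define v where "v i = Complex (x i) (y i)" for i
  have "0 \<le> Re (\<Sum>i<n. \<Sum>j<n. cnj (v i) * (complex_of_real (G i j) - \<i> * complex_of_real (K i j)) * v j)"
    using assms unfolding psd_c_def by blast
  also have "\<dots> = (\<Sum>i<n. \<Sum>j<n. x i * G i j * x j + y i * G i j * y j + x i * K i j * y j - y i * K i j * x j)"
    by (simp only: Re_sum v_def ReIm_term)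
  also have "\<dots> = qf n G x x + qf n G y y + qf n K x y - qf n K y x"
    by (simp add: qf_def sum.distrib sum_subtractf)
  finally show ?thesis .
qed

lemma real_imp_psd_c:
  assumes sym: "\<And>i j. i < n \<Longrightarrow> j < n \<Longrightarrow> G i j = G j i"
    and asym: "\<And>i j. i < n \<Longrightarrow> j < n \<Longrightarrow> K i j = - K j i"
    and H: "\<And>x y. 0 \<le> qf n G x x + qf n G y y + qf n K x y - qf n K y x"
  shows "psd_c n (\<lambda>i j. complex_of_real (G i j) - \<i> * complex_of_real (K i j))"
  unfolding psd_c_def
proof (intro allI conjI)
  fix v :: "nat \<Rightarrow> complex"
  let ?x = "\<lambda>i. Re (v i)" and ?y = "\<lambda>i. Im (v i)"
  have "Im (\<Sum>i<n. \<Sum>j<n. cnj (v i) * (complex_of_real (G i j) - \<i> * complex_of_real (K i j)) * v j)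
      = (\<Sum>i<n. \<Sum>j<n. Re (v i) * G i j * Im (v j) - Im (v i) * G i j * Re (v j) - Re (v i) * K i j * Re (v j) - Im (v i) * K i j * Im (v j))"
    by (simp only: Im_sum ReIm_term2)
  also have "\<dots> = (qf n G ?x ?y - qf n G ?y ?x) - (qf n K ?x ?x + qf n K ?y ?y)"
    by (simp add: qf_def sum.distrib sum_subtractf)
  also have "\<dots> = 0"
  proof -
    have "qf n G ?x ?y = qf n G ?y ?x" by (rule qf_swap_sym) (rule sym)
    moreover have "qf n K ?x ?x = 0" by (rule qf_asym_zero) (rule asym)
    moreover have "qf n K ?y ?y = 0" by (rule qf_asym_zero) (rule asym)
    ultimately show ?thesis by simp
  qed
  finally show "Im (\<Sum>i<n. \<Sum>j<n. cnj (v i) * (complex_of_real (G i j) - \<i> * complex_of_real (K i j)) * v j) = 0" .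
  have "Re (\<Sum>i<n. \<Sum>j<n. cnj (v i) * (complex_of_real (G i j) - \<i> * complex_of_real (K i j)) * v j)
     = (\<Sum>i<n. \<Sum>j<n. Re (v i) * G i j * Re (v j) + Im (v i) * G i j * Im (v j) + Re (v i) * K i j * Im (v j) - Im (v i) * K i j * Re (v j))"
    by (simp only: Re_sum ReIm_term2)
  also have "\<dots> = qf n G ?x ?x + qf n G ?y ?y + qf n K ?x ?y - qf n K ?y ?x"
    by (simp add: qf_def sum.distrib sum_subtractf)
  finally show "0 \<le> Re (\<Sum>i<n. \<Sum>j<n. cnj (v i) * (complex_of_real (G i j) - \<i> * complex_of_real (K i j)) * v j)"
    using H[of ?x ?y] by linarith
qed

lemma ge_iK_iff:
  assumes "\<And>i j. i < n \<Longrightarrow> j < n \<Longrightarrow> G i j = G j i"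
    and "\<And>i j. i < n \<Longrightarrow> j < n \<Longrightarrow> K i j = - K j i"
  shows "ge_iK n G K \<longleftrightarrow> (\<forall>x y. 0 \<le> qf n G x x + qf n G y y + qf n K x y - qf n K y x)"
  unfolding ge_iK_def
proof
  assume "psd_c n (\<lambda>i j. complex_of_real (G i j) - \<i> * complex_of_real (K i j))"
  then show "\<forall>x y. 0 \<le> qf n G x x + qf n G y y + qf n K x y - qf n K y x"
    by (intro allI psd_c_imp_real)
next
  assume "\<forall>x y. 0 \<le> qf n G x x + qf n G y y + qf n K x y - qf n K y x"
  then show "psd_c n (\<lambda>i j. complex_of_real (G i j) - \<i> * complex_of_real (K i j))"
    by (intro real_imp_psd_c) (rule assms(1), assumption+, rule assms(2), assumption+, blast)
qed

lemma ge_iK_real: "ge_iK n G K \<Longrightarrow> 0 \<le> qf n G x x + qf n G y y + qf n K x y - qf n K y x"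
  unfolding ge_iK_def by (rule psd_c_imp_real)

lemma psd_r_qf: "psd_r n M \<longleftrightarrow> (\<forall>v. 0 \<le> qf n M v v)"
  unfolding psd_r_def qf_def by simp
lemma pd_r_qf: "pd_r n M \<longleftrightarrow> (\<forall>v. (\<exists>i<n. v i \<noteq> 0) \<longrightarrow> 0 < qf n M v v)"
  unfolding pd_r_def qf_def by simp

lemma sum2: "(\<Sum>i<(2::nat). f i) = f 0 + f 1" by (simp add: eval_nat_numeral)
lemma sum4: "(\<Sum>i<(4::nat). f i) = f 0 + f 1 + f 2 + f 3" by (simp add: eval_nat_numeral)
lemma sum6: "(\<Sum>i<(6::nat). f i) = f 0 + f 1 + f 2 + f 3 + f 4 + f 5" by (simp add: eval_nat_numeral)

definition ridx :: "nat \<Rightarrow> nat \<Rightarrow> nat" where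
  "ridx x p = (if p div 2 < x then p else p + 2)"

lemma lt4_cases: "(p::nat) < 4 \<Longrightarrow> p = 0 \<or> p = 1 \<or> p = 2 \<or> p = 3" by presburger
lemma lt6_cases: "(p::nat) < 6 \<Longrightarrow> p = 0 \<or> p = 1 \<or> p = 2 \<or> p = 3 \<or> p = 4 \<or> p = 5" by presburger
lemma lt3_cases: "(p::nat) < 3 \<Longrightarrow> p = 0 \<or> p = 1 \<or> p = 2" by presburger

lemma ridx_vals:
  "ridx 0 0 = 2" "ridx 0 1 = 3" "ridx 0 2 = 4" "ridx 0 3 = 5"
  "ridx 1 0 = 0" "ridx 1 1 = 1" "ridx 1 2 = 4" "ridx 1 3 = 5"
  "ridx 2 0 = 0" "ridx 2 1 = 1" "ridx 2 2 = 2" "ridx 2 3 = 3"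
  by (simp_all add: ridx_def)

lemma sum_split6:
  assumes "x < 3"
  shows "(\<Sum>i<6. f i) = f (2*x) + f (2*x+1) + (\<Sum>p<4. f (ridx x p))"
  using lt3_cases[OF assms] by (elim disjE) (simp_all add: sum4 sum6 ridx_def ac_simps numeral_2_eq_2[symmetric] numeral_3_eq_3[symmetric])

lemma ridx_div: "x < 3 \<Longrightarrow> p < 4 \<Longrightarrow> ridx x p div 2 \<noteq> x"
  unfolding ridx_def by auto
lemma ridx_lt: "x < 3 \<Longrightarrow> p < 4 \<Longrightarrow> ridx x p < 6"
  unfolding ridx_def by auto
lemma rest_ridx: "x < 3 \<Longrightarrow> p < 4 \<Longrightarrow> rest_idx x (ridx x p) = p"
  unfolding ridx_def rest_idx_def by auto
lemma ridx_rest: "x < 3 \<Longrightarrow> i < 6 \<Longrightarrow> i div 2 \<noteq> x \<Longrightarrow> ridx x (rest_idx x i) = i"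
  using lt3_cases[of x] lt6_cases[of i] unfolding ridx_def rest_idx_def by auto
lemma rest_lt: "x < 3 \<Longrightarrow> i < 6 \<Longrightarrow> i div 2 \<noteq> x \<Longrightarrow> rest_idx x i < 4"
  using lt3_cases[of x] lt6_cases[of i] unfolding rest_idx_def by auto
lemma Jsym_ridx: "x < 3 \<Longrightarrow> p < 4 \<Longrightarrow> q < 4 \<Longrightarrow> Jsym (ridx x p) (ridx x q) = Jsym p q"
  using lt3_cases[of x] lt4_cases[of p] lt4_cases[of q]
  by (auto simp: ridx_def Jsym_def J1_def)

definition mkvec :: "nat \<Rightarrow> (nat \<Rightarrow> real) \<Rightarrow> (nat \<Rightarrow> real) \<Rightarrow> nat \<Rightarrow> real" where
  "mkvec x zA wR i = (if i div 2 = x then zA (i mod 2) else wR (rest_idx x i))"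

lemma mkvec_A0: "mkvec x zA wR (2*x) = zA 0" by (simp add: mkvec_def)
lemma mkvec_A1: "mkvec x zA wR (2*x+1) = zA 1" by (simp add: mkvec_def)
lemma mkvec_A1': "mkvec x zA wR (Suc (2*x)) = zA 1" by (simp add: mkvec_def)
lemma mkvec_R: "x < 3 \<Longrightarrow> p < 4 \<Longrightarrow> mkvec x zA wR (ridx x p) = wR p"
  by (simp add: mkvec_def ridx_div rest_ridx)

lemma qf_split:
  assumes x: "x < 3"
  shows "qf 6 N v w =
     (v (2*x) * N (2*x) (2*x) * w (2*x) + v (2*x) * N (2*x) (2*x+1) * w (2*x+1)
      + v (2*x+1) * N (2*x+1) (2*x) * w (2*x) + v (2*x+1) * N (2*x+1) (2*x+1) * w (2*x+1))
     + (\<Sum>p<4. (v (2*x) * N (2*x) (ridx x p) + v (2*x+1) * N (2*x+1) (ridx x p)) * w (ridx x p))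
     + (\<Sum>p<4. v (ridx x p) * (N (ridx x p) (2*x) * w (2*x) + N (ridx x p) (2*x+1) * w (2*x+1)))
     + qf 4 (\<lambda>p q. N (ridx x p) (ridx x q)) (\<lambda>p. v (ridx x p)) (\<lambda>p. w (ridx x p))"
  unfolding qf_def
  by (simp only: sum_split6[OF x]) (simp add: sum.distrib algebra_simps sum_distrib_left sum_distrib_right)

lemma qf_split_mk:
  assumes x: "x < 3"
  shows "qf 6 N (mkvec x zA wR) (mkvec x zA' wR') =
     (zA 0 * N (2*x) (2*x) * zA' 0 + zA 0 * N (2*x) (2*x+1) * zA' 1
      + zA 1 * N (2*x+1) (2*x) * zA' 0 + zA 1 * N (2*x+1) (2*x+1) * zA' 1)
     + (\<Sum>p<4. (zA 0 * N (2*x) (ridx x p) + zA 1 * N (2*x+1) (ridx x p)) * wR' p)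
     + (\<Sum>p<4. wR p * (N (ridx x p) (2*x) * zA' 0 + N (ridx x p) (2*x+1) * zA' 1))
     + qf 4 (\<lambda>p q. N (ridx x p) (ridx x q)) wR wR'"
proof -
  have e1: "(\<Sum>p<4. (zA 0 * N (2*x) (ridx x p) + zA 1 * N (2*x+1) (ridx x p)) * mkvec x zA' wR' (ridx x p))
        = (\<Sum>p<4. (zA 0 * N (2*x) (ridx x p) + zA 1 * N (2*x+1) (ridx x p)) * wR' p)"
    by (rule sum.cong) (auto simp: mkvec_R x)
  have e2: "(\<Sum>p<4. mkvec x zA wR (ridx x p) * (N (ridx x p) (2*x) * zA' 0 + N (ridx x p) (2*x+1) * zA' 1))
        = (\<Sum>p<4. wR p * (N (ridx x p) (2*x) * zA' 0 + N (ridx x p) (2*x+1) * zA' 1))"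
    by (rule sum.cong) (auto simp: mkvec_R x)
  have e3: "qf 4 (\<lambda>p q. N (ridx x p) (ridx x q)) (\<lambda>p. mkvec x zA wR (ridx x p)) (\<lambda>p. mkvec x zA' wR' (ridx x p))
      = qf 4 (\<lambda>p q. N (ridx x p) (ridx x q)) wR wR'"
    unfolding qf_def by (intro sum.cong refl) (auto simp: mkvec_R x)
  show ?thesis
    unfolding qf_split[OF x, of N "mkvec x zA wR" "mkvec x zA' wR'"] e3
    by (simp add: mkvec_A0 mkvec_A1 mkvec_A1' mkvec_R x)
qed

lemma tbt_min:
  fixes P00 P01 P11 b0 b1 z0 z1 :: real
  assumes p0: "P00 > 0" and dpos: "P00 * P11 - P01 * P01 > 0"
  shows "0 \<le> P00 * z0 * z0 + 2 * P01 * z0 * z1 + P11 * z1 * z1 + 2 * (z0 * b0 + z1 * b1)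
            + (b0 * (P11 * b0 - P01 * b1) + b1 * (P00 * b1 - P01 * b0)) / (P00 * P11 - P01 * P01)"
proof -
  define d where "d = P00 * P11 - P01 * P01"
  have d: "d > 0" using dpos d_def by simp
  define Q where "Q = P00 * z0 * z0 + 2 * P01 * z0 * z1 + P11 * z1 * z1 + 2 * (z0 * b0 + z1 * b1)"
  define R where "R = b0 * (P11 * b0 - P01 * b1) + b1 * (P00 * b1 - P01 * b0)"
  have "P00 * d * (d * Q + R)
        = (P00 * (d * z0 + P11 * b0 - P01 * b1) + P01 * (d * z1 + P00 * b1 - P01 * b0))^2
          + d * (d * z1 + P00 * b1 - P01 * b0)^2"
    unfolding Q_def R_def d_def by algebra
  moreover have "0 \<le> (P00 * (d * z0 + P11 * b0 - P01 * b1) + P01 * (d * z1 + P00 * b1 - P01 * b0))^2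
          + d * (d * z1 + P00 * b1 - P01 * b0)^2"
    using d by simp
  ultimately have "0 \<le> P00 * d * (d * Q + R)" by simp
  moreover have pd: "0 < P00 * d" using d p0 by simp
  ultimately have "0 \<le> d * Q + R" by (auto simp: zero_le_mult_iff)
  then have "0 \<le> (d * Q + R) / d" using d by simp
  also have "(d * Q + R) / d = Q + R / d" using d by (simp add: field_simps)
  finally show ?thesis unfolding Q_def R_def d_def .
qed

lemma tbt_opt:
  fixes P00 P01 P11 b0 b1 d :: real
  assumes dd: "d = P00 * P11 - P01 * P01" and d0: "d \<noteq> 0"
  shows "P00 * (- (P11 * b0 - P01 * b1) / d) * (- (P11 * b0 - P01 * b1) / d)
     + 2 * P01 * (- (P11 * b0 - P01 * b1) / d) * (- (P00 * b1 - P01 * b0) / d)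
     + P11 * (- (P00 * b1 - P01 * b0) / d) * (- (P00 * b1 - P01 * b0) / d)
     + 2 * ((- (P11 * b0 - P01 * b1) / d) * b0 + (- (P00 * b1 - P01 * b0) / d) * b1)
     = - (b0 * (P11 * b0 - P01 * b1) + b1 * (P00 * b1 - P01 * b0)) / d"
proof -
  have "d * d * (P00 * (- (P11 * b0 - P01 * b1) / d) * (- (P11 * b0 - P01 * b1) / d)
     + 2 * P01 * (- (P11 * b0 - P01 * b1) / d) * (- (P00 * b1 - P01 * b0) / d)
     + P11 * (- (P00 * b1 - P01 * b0) / d) * (- (P00 * b1 - P01 * b0) / d)
     + 2 * ((- (P11 * b0 - P01 * b1) / d) * b0 + (- (P00 * b1 - P01 * b0) / d) * b1))
     = P00 * (P11 * b0 - P01 * b1) * (P11 * b0 - P01 * b1)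
     + 2 * P01 * (P11 * b0 - P01 * b1) * (P00 * b1 - P01 * b0)
     + P11 * (P00 * b1 - P01 * b0) * (P00 * b1 - P01 * b0)
     - 2 * d * ((P11 * b0 - P01 * b1) * b0 + (P00 * b1 - P01 * b0) * b1)"
    using d0 by (simp add: field_simps)
  also have "\<dots> = d * d * (- (b0 * (P11 * b0 - P01 * b1) + b1 * (P00 * b1 - P01 * b0)) / d)"
    using d0 unfolding dd by (simp add: field_simps)
  finally have eq: "d * d * (P00 * (- (P11 * b0 - P01 * b1) / d) * (- (P11 * b0 - P01 * b1) / d)
     + 2 * P01 * (- (P11 * b0 - P01 * b1) / d) * (- (P00 * b1 - P01 * b0) / d)
     + P11 * (- (P00 * b1 - P01 * b0) / d) * (- (P00 * b1 - P01 * b0) / d)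
     + 2 * ((- (P11 * b0 - P01 * b1) / d) * b0 + (- (P00 * b1 - P01 * b0) / d) * b1))
     = d * d * (- (b0 * (P11 * b0 - P01 * b1) + b1 * (P00 * b1 - P01 * b0)) / d)" .
  have dd0: "d * d \<noteq> 0" using d0 by simp
  show ?thesis using eq dd0 by (metis mult_cancel_left)
qed

lemma qf_scale: "qf n G (\<lambda>i. t * x i) (\<lambda>i. s * y i) = t * s * qf n G x y"
  unfolding qf_def by (simp add: sum_distrib_left algebra_simps)

lemma quad_pos:
  fixes A B N :: real
  assumes H: "\<And>t. 0 \<le> A + t * t * B - 2 * t * N" and N: "N > 0"
  shows "A > 0"
proof (cases "B \<le> 0")
  case True
  then show ?thesis using H[of 1] N by simp
next
  case False
  then have B: "B > 0" by simp
  have "0 \<le> A + (N/B) * (N/B) * B - 2 * (N/B) * N" by (rule H)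
  also have "\<dots> = A - N * N / B" using B by (simp add: field_simps)
  finally have "N * N / B \<le> A" by simp
  moreover have "0 < N * N / B" using N B by simp
  ultimately show ?thesis by simp
qed

lemma sumsq_pos4:
  fixes v :: "nat \<Rightarrow> real"
  assumes "\<exists>i<4. v i \<noteq> 0"
  shows "0 < v 0 * v 0 + v 1 * v 1 + v 2 * v 2 + v 3 * v 3"
proof -
  obtain i where i: "i < 4" "v i \<noteq> 0" using assms by blast
  have "0 < v i * v i" using i by (auto simp: zero_less_mult_iff linorder_neq_iff)
  moreover have "0 \<le> v j * v j" for j by simp
  ultimately show ?thesis using lt4_cases[OF i(1)]
    by (auto simp: add_pos_nonneg add_nonneg_pos)
qed

lemma pd4_from_ge_iK:
  assumes G: "ge_iK 4 G Jsym"
  shows "pd_r 4 G"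
  unfolding pd_r_qf
proof (intro allI impI)
  fix v :: "nat \<Rightarrow> real"
  assume v: "\<exists>i<4. v i \<noteq> 0"
  define w :: "nat \<Rightarrow> real" where "w i = (if i = 0 then - v 1 else if i = 1 then v 0 else if i = 2 then - v 3 else if i = 3 then v 2 else 0)" for i
  define N where "N = v 0 * v 0 + v 1 * v 1 + v 2 * v 2 + v 3 * v 3"
  have N: "N > 0" unfolding N_def by (rule sumsq_pos4[OF v])
  have "0 \<le> qf 4 G v v + t * t * qf 4 G w w - 2 * t * N" for t
  proof -
    have h: "0 \<le> qf 4 G v v + qf 4 G (\<lambda>i. t * w i) (\<lambda>i. t * w i) + qf 4 Jsym v (\<lambda>i. t * w i) - qf 4 Jsym (\<lambda>i. t * w i) v"
      by (rule ge_iK_real[OF G])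
    have e1: "qf 4 G (\<lambda>i. t * w i) (\<lambda>i. t * w i) = t * t * qf 4 G w w" by (rule qf_scale)
    have e2: "qf 4 Jsym v (\<lambda>i. t * w i) - qf 4 Jsym (\<lambda>i. t * w i) v = - 2 * t * N"
      unfolding qf_def N_def w_def by (simp add: sum4 Jsym_def J1_def algebra_simps)
    show ?thesis using h e1 e2 by linarith
  qed
  then show "0 < qf 4 G v v" using quad_pos N by blast
qed

definition Mx :: "nat \<Rightarrow> rmat \<Rightarrow> rmat \<Rightarrow> rmat" where
  "Mx x g1 M i j = M i j - (if i div 2 = x \<and> j div 2 = x then g1 (i mod 2) (j mod 2) else 0)"
definition Kx :: "nat \<Rightarrow> rmat" where
  "Kx x i j = (if i div 2 = x \<or> j div 2 = x then 0 else Jsym i j)"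

lemma qf_cong:
  assumes "\<And>i. i < n \<Longrightarrow> v i = v' i" "\<And>i. i < n \<Longrightarrow> w i = w' i"
  shows "qf n M v w = qf n M v' w'"
  unfolding qf_def using assms by (intro sum.cong refl) auto

lemma qf_cong_mat:
  assumes "\<And>i j. i < n \<Longrightarrow> j < n \<Longrightarrow> M i j = M' i j"
  shows "qf n M v w = qf n M' v w"
  unfolding qf_def using assms by (intro sum.cong refl) auto

lemma qf_diff: "qf n (\<lambda>i j. A i j - B i j) v w = qf n A v w - qf n B v w"
  unfolding qf_def by (simp add: algebra_simps sum_subtractf)

lemma qf_zero_l: "qf n M (\<lambda>i. 0) w = 0" and qf_zero_r: "qf n M v (\<lambda>i. 0) = 0"
  unfolding qf_def by simp_all

lemma mkvec_eq:
  assumes x: "x < 3" and i: "i < 6"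
  shows "v i = mkvec x (\<lambda>k. v (2*x+k)) (\<lambda>p. v (ridx x p)) i"
proof (cases "i div 2 = x")
  case True
  then have "i = 2*x + i mod 2" by (metis div_mult_mod_eq mult.commute)
  then show ?thesis using True unfolding mkvec_def by simp
next
  case False
  then show ?thesis unfolding mkvec_def using ridx_rest[OF x i False] by simp
qed

lemma schur_bisep:
  assumes x: "x < 3"
    and symM: "rsym 6 M"
    and g1: "CM 1 g1"
    and key: "\<And>X Y. 0 \<le> qf 6 (Mx x g1 M) X X + qf 6 (Mx x g1 M) Y Y + qf 6 (Kx x) X Y - qf 6 (Kx x) Y X"
    and inj: "\<And>z0 z1. z0 \<noteq> 0 \<or> z1 \<noteq> 0 \<Longrightarrow> \<exists>p<4. M (ridx x p) (2*x) * z0 + M (ridx x p) (2*x+1) * z1 \<noteq> 0"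
  shows "bisep x M"
proof -
  define N where "N = Mx x g1 M"
  have sg1: "g1 1 0 = g1 0 1" using g1 unfolding CM_def rsym_def by auto
  have sM: "\<And>i j. i < 6 \<Longrightarrow> j < 6 \<Longrightarrow> M i j = M j i" using symM unfolding rsym_def by auto
  have x6: "2*x < 6" "2*x+1 < 6" using x by auto
  define P00 where "P00 = N (2*x) (2*x)"
  define P01 where "P01 = N (2*x) (2*x+1)"
  define P11 where "P11 = N (2*x+1) (2*x+1)"
  have P10: "N (2*x+1) (2*x) = P01"
    unfolding P01_def N_def Mx_def using sM[OF x6(2) x6(1)] sg1 by simp
  define B where "B p k = M (ridx x p) (2*x+k)" for p k
  have NB1: "N (ridx x p) (2*x+k) = B p k" if "p < 4" for p k
    unfolding N_def Mx_def B_def using ridx_div[OF x that] by simp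
  have NB2: "N (2*x+k) (ridx x p) = B p k" if "p < 4" "k < 2" for p k
  proof -
    have "N (2*x+k) (ridx x p) = M (2*x+k) (ridx x p)"
      unfolding N_def Mx_def using ridx_div[OF x that(1)] by simp
    also have "\<dots> = M (ridx x p) (2*x+k)" using sM[of "2*x+k" "ridx x p"] ridx_lt[OF x that(1)] that x by simp
    finally show ?thesis unfolding B_def .
  qed
  have NB1': "N (ridx x p) (2*x) = B p 0" "N (ridx x p) (2*x+1) = B p 1" if "p < 4" for p
    using NB1[OF that, of 0] NB1[OF that, of 1] by simp_all
  have NB2': "N (2*x) (ridx x p) = B p 0" "N (2*x+1) (ridx x p) = B p 1" if "p < 4" for p
    using NB2[OF that, of 0] NB2[OF that, of 1] by simp_all
  have NR: "N (ridx x p) (ridx x q) = M (ridx x p) (ridx x q)" if "p < 4" for p q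
    unfolding N_def Mx_def using ridx_div[OF x that] by simp
  define bv where "bv w k = (\<Sum>p<4. w p * B p k)" for w k
  have QA: "qf 6 N (mkvec x zA wR) (mkvec x zA' wR') =
     (zA 0 * P00 * zA' 0 + zA 0 * P01 * zA' 1 + zA 1 * P01 * zA' 0 + zA 1 * P11 * zA' 1)
     + (zA 0 * bv wR' 0 + zA 1 * bv wR' 1) + (zA' 0 * bv wR 0 + zA' 1 * bv wR 1)
     + qf 4 (\<lambda>p q. M (ridx x p) (ridx x q)) wR wR'" for zA wR zA' wR'
  proof -
    have c1: "(\<Sum>p<4. (zA 0 * N (2*x) (ridx x p) + zA 1 * N (2*x+1) (ridx x p)) * wR' p)
        = zA 0 * bv wR' 0 + zA 1 * bv wR' 1"
    proof -
      have "(\<Sum>p<4. (zA 0 * N (2*x) (ridx x p) + zA 1 * N (2*x+1) (ridx x p)) * wR' p)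
         = (\<Sum>p<4. zA 0 * (wR' p * B p 0) + zA 1 * (wR' p * B p 1))"
        apply (intro sum.cong refl)
        subgoal for p using NB2'[of p] by (simp add: algebra_simps)
        done
      then show ?thesis unfolding bv_def by (simp add: sum.distrib sum_distrib_left)
    qed
    have c2: "(\<Sum>p<4. wR p * (N (ridx x p) (2*x) * zA' 0 + N (ridx x p) (2*x+1) * zA' 1))
        = zA' 0 * bv wR 0 + zA' 1 * bv wR 1"
    proof -
      have "(\<Sum>p<4. wR p * (N (ridx x p) (2*x) * zA' 0 + N (ridx x p) (2*x+1) * zA' 1))
         = (\<Sum>p<4. zA' 0 * (wR p * B p 0) + zA' 1 * (wR p * B p 1))"
        apply (intro sum.cong refl)
        subgoal for p using NB1'[of p] by (simp add: algebra_simps)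
        done
      then show ?thesis unfolding bv_def by (simp add: sum.distrib sum_distrib_left)
    qed
    have c3: "qf 4 (\<lambda>p q. N (ridx x p) (ridx x q)) wR wR' = qf 4 (\<lambda>p q. M (ridx x p) (ridx x q)) wR wR'"
      by (rule qf_cong_mat) (simp add: NR)
    show ?thesis unfolding qf_split_mk[OF x] c1 c2 c3 P00_def[symmetric] P01_def[symmetric] P11_def[symmetric] P10
      by simp
  qed
  have psdN: "0 \<le> qf 6 N X X" for X
    using key[of X "\<lambda>i. 0"] unfolding N_def by (simp add: qf_zero_l qf_zero_r)
  have bv0: "bv (\<lambda>p. 0) k = 0" for k unfolding bv_def by simp
  have qf40: "qf 4 Mr (\<lambda>p. 0) (\<lambda>p. 0) = 0" for Mr by (simp add: qf_zero_l)
  have Ppos: "0 < P00*z0*z0 + 2*P01*z0*z1 + P11*z1*z1" if nz: "z0 \<noteq> 0 \<or> z1 \<noteq> 0" for z0 z1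
  proof -
    define zA :: "nat \<Rightarrow> real" where "zA k = (if k = 0 then z0 else z1)" for k
    have zA01: "zA 0 = z0" "zA 1 = z1" "zA (Suc 0) = z1" unfolding zA_def by simp_all
    have ge: "0 \<le> P00*z0*z0 + 2*P01*z0*z1 + P11*z1*z1"
      using psdN[of "mkvec x zA (\<lambda>p. 0)"] unfolding QA by (simp add: bv0 qf40 zA01 algebra_simps)
    define c where "c p = B p 0 * z0 + B p 1 * z1" for p
    obtain p0 where p0: "p0 < 4" "c p0 \<noteq> 0"
      using inj[OF nz] unfolding c_def B_def by (auto simp: mult.commute)
    define S where "S = (\<Sum>p<4. c p * c p)"
    have S: "S > 0" unfolding S_def
      by (rule sum_pos2[of "{..<4}" p0]) (use p0 in \<open>auto simp: zero_less_mult_iff linorder_neq_iff\<close>)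
    define Q where "Q = qf 4 (\<lambda>p q. M (ridx x p) (ridx x q)) (\<lambda>p. - c p) (\<lambda>p. - c p)"
    have cross: "t * z0 * bv (\<lambda>p. - c p) 0 + t * z1 * bv (\<lambda>p. - c p) 1 = - t * S" for t
      unfolding bv_def S_def c_def sum4 by algebra
    show ?thesis
    proof (rule ccontr)
      assume "\<not> ?thesis"
      then have P0: "P00*z0*z0 + 2*P01*z0*z1 + P11*z1*z1 = 0" using ge by simp
      define t where "t = (\<bar>Q\<bar> + 1) / S"
      have "0 \<le> qf 6 N (mkvec x (\<lambda>k. t * zA k) (\<lambda>p. - c p)) (mkvec x (\<lambda>k. t * zA k) (\<lambda>p. - c p))"
        by (rule psdN)
      also have "\<dots> = t * t * (P00*z0*z0 + 2*P01*z0*z1 + P11*z1*z1) + 2 * (- t * S) + Q"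
        unfolding QA Q_def zA01 using cross[of t] by (simp add: algebra_simps)
      also have "\<dots> = - 2 * (\<bar>Q\<bar> + 1) + Q" using P0 S unfolding t_def by (simp add: field_simps)
      finally show False by simp
    qed
  qed
  have P00pos: "P00 > 0" using Ppos[of 1 0] by simp
  have "0 < P00 * (P00 * P11 - P01 * P01)"
    using Ppos[of "- P01" P00] P00pos by (simp add: algebra_simps)
  then have dpos: "P00 * P11 - P01 * P01 > 0" using P00pos by (simp add: zero_less_mult_iff)
  define d where "d = P00 * P11 - P01 * P01"
  have d0: "d \<noteq> 0" "d > 0" using dpos d_def by simp_all
  define MR where "MR p q = M (ridx x p) (ridx x q)" for p q
  define g2 where "g2 p q = MR p q - (B p 0 * (P11 * B q 0 - P01 * B q 1) + B p 1 * (P00 * B q 1 - P01 * B q 0)) / d" for p q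
  define tq where "tq w w' = (bv w 0 * (P11 * bv w' 0 - P01 * bv w' 1) + bv w 1 * (P00 * bv w' 1 - P01 * bv w' 0)) / d" for w w'
  have qfg2: "qf 4 g2 w w' = qf 4 MR w w' - tq w w'" for w w'
  proof -
    have "qf 4 g2 w w' = qf 4 MR w w' - qf 4 (\<lambda>p q. (B p 0 * (P11 * B q 0 - P01 * B q 1) + B p 1 * (P00 * B q 1 - P01 * B q 0)) / d) w w'"
      unfolding g2_def by (rule qf_diff)
    also have "qf 4 (\<lambda>p q. (B p 0 * (P11 * B q 0 - P01 * B q 1) + B p 1 * (P00 * B q 1 - P01 * B q 0)) / d) w w' = tq w w'"
      unfolding qf_def tq_def bv_def sum4 using d0 by (simp add: field_simps)
    finally show ?thesis .
  qed
  have symg2: "g2 p q = g2 q p" if "p < 4" "q < 4" for p q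
  proof -
    have "MR p q = MR q p" unfolding MR_def using sM ridx_lt[OF x that(1)] ridx_lt[OF x that(2)] by simp
    then show ?thesis unfolding g2_def by (simp add: algebra_simps)
  qed
  have asymJ: "Jsym p q = - Jsym q p" for p q
    unfolding Jsym_def J1_def by auto
  define zf :: "(nat \<Rightarrow> real) \<Rightarrow> nat \<Rightarrow> real" where "zf w k = (if k = 0 then - (P11 * bv w 0 - P01 * bv w 1) / d else - (P00 * bv w 1 - P01 * bv w 0) / d)" for w k
  have zf01: "zf w 0 = - (P11 * bv w 0 - P01 * bv w 1) / d" "zf w 1 = - (P00 * bv w 1 - P01 * bv w 0) / d" for w
    unfolding zf_def by simp_all
  have Kpart: "qf 6 (Kx x) (mkvec x zA wR) (mkvec x zA' wR') = qf 4 Jsym wR wR'" for zA wR zA' wR'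
  proof -
    have k1: "Kx x (2*x+1) j = 0" "Kx x j (2*x+1) = 0" "Kx x (Suc (2*x)) j = 0" "Kx x j (Suc (2*x)) = 0" for j unfolding Kx_def by simp_all
    have k1': "Kx x (2*x) j = 0" "Kx x j (2*x) = 0" for j unfolding Kx_def by simp_all
    have k2: "qf 4 (\<lambda>p q. Kx x (ridx x p) (ridx x q)) wR wR' = qf 4 Jsym wR wR'"
      by (rule qf_cong_mat) (simp add: Kx_def ridx_div[OF x] Jsym_ridx[OF x])
    show ?thesis unfolding qf_split_mk[OF x] k2 by (simp add: k1 k1')
  qed
  have keyg2: "0 \<le> qf 4 g2 w w + qf 4 g2 w' w' + qf 4 Jsym w w' - qf 4 Jsym w' w" for w w'
  proof -
    have opt: "qf 6 N (mkvec x (zf w) w) (mkvec x (zf w) w) = qf 4 g2 w w" for w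
    proof -
      have "qf 6 N (mkvec x (zf w) w) (mkvec x (zf w) w)
        = P00 * zf w 0 * zf w 0 + 2 * P01 * zf w 0 * zf w 1 + P11 * zf w 1 * zf w 1 + 2 * (zf w 0 * bv w 0 + zf w 1 * bv w 1)
          + qf 4 MR w w"
        unfolding QA MR_def by (simp add: algebra_simps)
      also have "P00 * zf w 0 * zf w 0 + 2 * P01 * zf w 0 * zf w 1 + P11 * zf w 1 * zf w 1 + 2 * (zf w 0 * bv w 0 + zf w 1 * bv w 1)
          = - tq w w"
        unfolding zf01 tq_def using tbt_opt[OF d_def d0(1), of "bv w 0" "bv w 1"] by (simp add: minus_divide_left)
      finally show ?thesis using qfg2 by simp
    qed
    show ?thesis
      using key[of "mkvec x (zf w) w" "mkvec x (zf w') w'"] unfolding N_def[symmetric] opt Kpart .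
  qed
  have geg2: "ge_iK 4 g2 Jsym"
    using keyg2 by (subst ge_iK_iff) (auto intro: symg2 asymJ)
  have CMg2: "CM 2 g2"
    unfolding CM_def rsym_def using geg2 pd4_from_ge_iK symg2 by auto
  have psd: "psd_r 6 (\<lambda>i j. M i j - embed_bip x g1 g2 i j)"
    unfolding psd_r_qf
  proof
    fix v :: "nat \<Rightarrow> real"
    define zA where "zA k = v (2*x+k)" for k
    define wR where "wR p = v (ridx x p)" for p
    define G2e where "G2e i j = (if i div 2 \<noteq> x \<and> j div 2 \<noteq> x then g2 (rest_idx x i) (rest_idx x j) else 0)" for i j
    have m: "(\<lambda>i j. M i j - embed_bip x g1 g2 i j) = (\<lambda>i j. N i j - G2e i j)"
      unfolding N_def Mx_def G2e_def embed_bip_def by (auto simp: fun_eq_iff)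
    have vv: "qf 6 Mm v v = qf 6 Mm (mkvec x zA wR) (mkvec x zA wR)" for Mm
      unfolding zA_def wR_def by (rule qf_cong) (rule mkvec_eq[OF x], simp)+
    have G2part: "qf 6 G2e (mkvec x zA wR) (mkvec x zA wR) = qf 4 g2 wR wR"
    proof -
      have k1: "G2e (2*x+1) j = 0" "G2e j (2*x+1) = 0" "G2e (Suc (2*x)) j = 0" "G2e j (Suc (2*x)) = 0" for j unfolding G2e_def by simp_all
      have k1': "G2e (2*x) j = 0" "G2e j (2*x) = 0" for j unfolding G2e_def by simp_all
      have k2: "qf 4 (\<lambda>p q. G2e (ridx x p) (ridx x q)) wR wR = qf 4 g2 wR wR"
        by (rule qf_cong_mat) (simp add: G2e_def ridx_div[OF x] rest_ridx[OF x])
      show ?thesis unfolding qf_split_mk[OF x] k2 by (simp add: k1 k1')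
    qed
    have "qf 6 (\<lambda>i j. M i j - embed_bip x g1 g2 i j) v v
       = P00 * zA 0 * zA 0 + 2 * P01 * zA 0 * zA 1 + P11 * zA 1 * zA 1 + 2 * (zA 0 * bv wR 0 + zA 1 * bv wR 1)
         + tq wR wR"
      unfolding m vv qf_diff G2part QA qfg2 MR_def by (simp add: algebra_simps)
    also have "\<dots> \<ge> 0" unfolding tq_def d_def by (rule tbt_min[OF P00pos dpos])
    finally show "0 \<le> qf 6 (\<lambda>i j. M i j - embed_bip x g1 g2 i j) v v" .
  qed
  show ?thesis unfolding bisep_def using g1 CMg2 psd by blast
qed

definition rf :: "nat \<Rightarrow> rmat \<Rightarrow> rmat \<Rightarrow> (nat \<Rightarrow> real) \<Rightarrow> (nat \<Rightarrow> real) \<Rightarrow> real" where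
  "rf n G K X Y = qf n G X X + qf n G Y Y + qf n K X Y - qf n K Y X"

definition Cpart :: "real \<Rightarrow> real \<Rightarrow> (nat \<Rightarrow> real) \<Rightarrow> (nat \<Rightarrow> real) \<Rightarrow> real" where
  "Cpart a1 a2 X Y = (X 4 - Y 5)^2 + (Y 4 + X 5)^2
     + a1 * ((X 1 + X 3 + X 4 + 2 * X 5)^2 + (Y 1 + Y 3 + Y 4 + 2 * Y 5)^2)
     + a2 * ((X 0 - X 2 + X 5)^2 + (Y 0 - Y 2 + Y 5)^2)"

lemma gam_entries:
  "gam a1 a2 i j = gam0 i j + a1 * (pt1 ! i) * (pt1 ! j) + a2 * (pt2 ! i) * (pt2 ! j)"
  by (simp add: gam_def)

lemma decomp_Kx:
  assumes "xb < 2"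
  shows "rf 6 (Mx xb g (gam a1 a2)) (Kx xb) X Y
    = rf 4 (\<lambda>i j. gam0 i j - (if i div 2 = xb \<and> j div 2 = xb then g (i mod 2) (j mod 2) else 0)) (Kx xb) X Y
      + Cpart a1 a2 X Y"
  using assms
  apply (cases "xb = 0")
  apply (simp_all add: rf_def qf_def sum4 sum6 Mx_def Kx_def gam_def gam0_def pt1_def pt2_def Jsym_def J1_def Cpart_def power2_eq_square)
  apply (simp_all add: algebra_simps)
  done

definition herm2 :: "real \<Rightarrow> real \<Rightarrow> real \<Rightarrow> real \<Rightarrow> real \<Rightarrow> real \<Rightarrow> real \<Rightarrow> real \<Rightarrow> real" where
  "herm2 n00 n11 p q w0r w0i w1r w1i = n00 * (w0r^2 + w0i^2) + n11 * (w1r^2 + w1i^2)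
     + 2 * (p * (w0r * w1r + w0i * w1i) - q * (w0r * w1i - w0i * w1r))"

lemma herm2_nonneg:
  assumes "n00 > 0" "n00 * n11 - p^2 - q^2 \<ge> 0"
  shows "herm2 n00 n11 p q w0r w0i w1r w1i \<ge> 0"
proof -
  have "n00 * herm2 n00 n11 p q w0r w0i w1r w1i
      = (n00 * w0r + p * w1r - q * w1i)^2 + (n00 * w0i + p * w1i + q * w1r)^2
        + (n00 * n11 - p^2 - q^2) * (w1r^2 + w1i^2)"
    unfolding herm2_def by algebra
  also have "\<dots> \<ge> 0" using assms(2) by simp
  finally show ?thesis using assms(1) by (simp add: zero_le_mult_iff)
qed

definition YA :: rmat where
  "YA i j = (if i = 0 \<and> j = 0 then (207 + 860*aa)/791 else if i = 1 \<and> j = 1 then (-153 + 740*aa)/791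
      else if (i = 0 \<and> j = 1) \<or> (i = 1 \<and> j = 0) then (-180 - 60*aa)/791 else 0)"

lemma wA_id:
  assumes ha: "aa * aa = 109/100"
  shows "rf 4 (\<lambda>i j. gam0 i j - (if i div 2 = 0 \<and> j div 2 = 0 then YA (i mod 2) (j mod 2) else 0)) (Kx 0) X Y
     + (81/1240 + 3/124 * aa) * ((2 * X 0 - 2 * X 2 - X 1 - X 3 + Y 0 - Y 2)^2 + (2 * Y 0 - 2 * Y 2 - Y 1 - Y 3 - X 0 + X 2)^2)
   = herm2 ((81/248) + (139/124)*aa) ((81/1240) + (127/124)*aa) ((81/620) + (3/62)*aa) ((1321/1240) + (3/124)*aa) (((101/1582) + (-115/791)*aa)*X 0 + ((300/791) + (100/791)*aa)*X 1 + 1*X 2 + ((-19/791) + (-270/791)*aa)*Y 0 + ((205/1582) + (-625/791)*aa)*Y 1) (((19/791) + (270/791)*aa)*X 0 + ((-205/1582) + (625/791)*aa)*X 1 + ((101/1582) + (-115/791)*aa)*Y 0 + ((300/791) + (100/791)*aa)*Y 1 + 1*Y 2) (((-300/791) + (-100/791)*aa)*X 0 + ((-1301/1582) + (-85/791)*aa)*X 1 + 1*X 3 + ((281/1582) + (-85/791)*aa)*Y 0 + ((-19/791) + (-270/791)*aa)*Y 1) (((-281/1582) + (85/791)*aa)*X 0 + ((19/791) + (270/791)*aa)*X 1 + ((-300/791) + (-100/791)*aa)*Y 0 + ((-1301/1582) + (-85/791)*aa)*Y 1 + 1*Y 3)"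
  apply (simp add: rf_def qf_def sum4 Kx_def gam0_def YA_def Jsym_def J1_def cc_def herm2_def power2_eq_square)
  using ha by algebra

lemma aa_sq: "aa * aa = 109/100"
  unfolding aa_def cc_def by (simp add: power2_eq_square)
lemma aa_pos: "aa > 0" unfolding aa_def cc_def by (simp add: power2_eq_square)
lemma aa_lb: "aa > 1044/1000"
proof (rule ccontr)
  assume "\<not> aa > 1044/1000"
  then have "aa \<le> 1044/1000" by simp
  then have "aa * aa \<le> (1044/1000) * (1044/1000)" using aa_pos by (intro mult_mono) auto
  then show False using aa_sq by simp
qed
lemma aa_ub: "aa < 1045/1000"
proof (rule ccontr)
  assume "\<not> aa < 1045/1000"
  then have "aa \<ge> 1045/1000" by simp
  then have "aa * aa \<ge> (1045/1000) * (1045/1000)" by (intro mult_mono) auto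
  then show False using aa_sq by simp
qed

lemma decomp_Jt0:
  "rf 6 (gam a1 a2) (Jtilde 0) X Y = rf 4 gam0 (Jtilde 0) X Y + Cpart a1 a2 X Y"
  by (simp add: rf_def qf_def sum4 sum6 Jtilde_def gam_def gam0_def pt1_def pt2_def Jsym_def J1_def Cpart_def power2_eq_square)
     (simp add: algebra_simps)

definition lr :: "(nat \<Rightarrow> real) \<Rightarrow> (nat \<Rightarrow> real) \<Rightarrow> real" where
  "lr X Y = 2 * X 0 - 2 * X 2 - X 1 - X 3 + Y 0 - Y 2"
definition li :: "(nat \<Rightarrow> real) \<Rightarrow> (nat \<Rightarrow> real) \<Rightarrow> real" where
  "li X Y = 2 * Y 0 - 2 * Y 2 - Y 1 - Y 3 - X 0 + X 2"

lemma CS: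
  assumes a1: "a1 > 0" and a2: "a2 > 0"
  shows "a1 * a2 / (a1 * a2 + a2 + 5 * a1) * ((lr X Y)^2 + (li X Y)^2) \<le> Cpart a1 a2 X Y"
proof -
  define D where "D = a1 * a2 + a2 + 5 * a1"
  have D: "D > 0" unfolding D_def using a1 a2 by (simp add: add_pos_pos)
  define z0r where "z0r = X 4 - Y 5"
  define z0i where "z0i = Y 4 + X 5"
  define z1r where "z1r = X 1 + X 3 + X 4 + 2 * X 5"
  define z1i where "z1i = Y 1 + Y 3 + Y 4 + 2 * Y 5"
  define z2r where "z2r = X 0 - X 2 + X 5"
  define z2i where "z2i = Y 0 - Y 2 + Y 5"
  have "D * Cpart a1 a2 X Y - a1 * a2 * ((lr X Y)^2 + (li X Y)^2)
     = a2 * ((z0r + a1 * z1r)^2 + (z0i + a1 * z1i)^2)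
       + a1 * ((2 * z0r - z0i - a2 * z2r)^2 + (z0r + 2 * z0i - a2 * z2i)^2)
       + ((a1 * (2 * z1r - z1i) + a2 * z2r)^2 + (a1 * (z1r + 2 * z1i) + a2 * z2i)^2)"
    unfolding D_def Cpart_def lr_def li_def z0r_def z0i_def z1r_def z1i_def z2r_def z2i_def by algebra
  also have "\<dots> \<ge> 0" using a1 a2 by simp
  finally have "a1 * a2 * ((lr X Y)^2 + (li X Y)^2) \<le> D * Cpart a1 a2 X Y" by simp
  then show ?thesis unfolding D_def[symmetric] using D by (simp add: field_simps)
qed

lemma keyA:
  assumes a1: "a1 > 0" and a2: "a2 > 0"
    and hk: "a1 * a2 / (a1 * a2 + a2 + 5 * a1) \<ge> 81/1240 + 3/124 * aa"
  shows "0 \<le> rf 6 (Mx 0 YA (gam a1 a2)) (Kx 0) X Y"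
proof -
  have L: "0 \<le> (lr X Y)^2 + (li X Y)^2" by simp
  have "(81/1240 + 3/124 * aa) * ((lr X Y)^2 + (li X Y)^2) \<le> a1 * a2 / (a1 * a2 + a2 + 5 * a1) * ((lr X Y)^2 + (li X Y)^2)"
    using hk L by (rule mult_right_mono)
  also have "\<dots> \<le> Cpart a1 a2 X Y" by (rule CS[OF a1 a2])
  finally have c: "(81/1240 + 3/124 * aa) * ((lr X Y)^2 + (li X Y)^2) \<le> Cpart a1 a2 X Y" .
  have h: "0 \<le> rf 4 (\<lambda>i j. gam0 i j - (if i div 2 = 0 \<and> j div 2 = 0 then YA (i mod 2) (j mod 2) else 0)) (Kx 0) X Y
     + (81/1240 + 3/124 * aa) * ((lr X Y)^2 + (li X Y)^2)"
    unfolding lr_def li_def wA_id[OF aa_sq]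
  proof (rule herm2_nonneg)
    show "0 < 81 / 248 + 139 / 124 * aa" using aa_pos by simp
    have "(81 / 248 + 139 / 124 * aa) * (81 / 1240 + 127 / 124 * aa) - (81 / 620 + 3 / 62 * aa)^2 - (1321 / 1240 + 3 / 124 * aa)^2
        = 729/6200 + 213/620 * aa" using aa_sq by algebra
    then show "0 \<le> (81 / 248 + 139 / 124 * aa) * (81 / 1240 + 127 / 124 * aa) - (81 / 620 + 3 / 62 * aa)^2 - (1321 / 1240 + 3 / 124 * aa)^2"
      using aa_pos by simp
  qed
  show ?thesis unfolding decomp_Kx[of 0, simplified] using h c by linarith
qed

lemma CM1_of:
  assumes s: "g 1 0 = g 0 1" and g00: "g 0 0 > 0" and dt: "g 0 0 * g 1 1 - g 0 1 * g 0 1 \<ge> 1"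
  shows "CM 1 g"
proof -
  have rs: "rsym 2 g" unfolding rsym_def using s by (auto simp: less_2_cases_iff)
  have pd: "pd_r 2 g" unfolding pd_r_qf
  proof (intro allI impI)
    fix v :: "nat \<Rightarrow> real" assume "\<exists>i<2. v i \<noteq> 0"
    then have nz: "v 0 \<noteq> 0 \<or> v 1 \<noteq> 0" by (auto simp: less_2_cases_iff)
    have "g 0 0 * qf 2 g v v = (g 0 0 * v 0 + g 0 1 * v 1)^2 + (g 0 0 * g 1 1 - g 0 1 * g 0 1) * (v 1)^2"
      unfolding qf_def sum2 using s by (simp add: power2_eq_square algebra_simps)
    moreover have p: "0 < (g 0 0 * v 0 + g 0 1 * v 1)^2 + (g 0 0 * g 1 1 - g 0 1 * g 0 1) * (v 1)^2"
    proof (cases "v 1 = 0")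
      case True then show ?thesis using nz g00 by simp
    next
      case False
      have "0 < (g 0 0 * g 1 1 - g 0 1 * g 0 1) * (v 1)^2" using dt False by simp
      then show ?thesis by (simp add: add_nonneg_pos)
    qed
    ultimately have "0 < g 0 0 * qf 2 g v v" by linarith
    then show "0 < qf 2 g v v" using g00 by (simp add: zero_less_mult_iff)
  qed
  have ge: "ge_iK 2 g Jsym"
  proof (subst ge_iK_iff)
    show "\<And>i j. i < 2 \<Longrightarrow> j < 2 \<Longrightarrow> g i j = g j i" using s by (auto simp: less_2_cases_iff)
    show "\<And>i j. i < 2 \<Longrightarrow> j < 2 \<Longrightarrow> Jsym i j = - Jsym j i" unfolding Jsym_def J1_def by auto
    show "\<forall>x y. 0 \<le> qf 2 g x x + qf 2 g y y + qf 2 Jsym x y - qf 2 Jsym y x"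
    proof (intro allI)
      fix x y :: "nat \<Rightarrow> real"
      have "qf 2 g x x + qf 2 g y y + qf 2 Jsym x y - qf 2 Jsym y x = herm2 (g 0 0) (g 1 1) (g 0 1) 1 (x 0) (y 0) (x 1) (y 1)"
        unfolding qf_def sum2 herm2_def Jsym_def J1_def using s by (simp add: power2_eq_square algebra_simps)
      also have "\<dots> \<ge> 0" using g00 dt by (intro herm2_nonneg) (auto simp: power2_eq_square)
      finally show "0 \<le> qf 2 g x x + qf 2 g y y + qf 2 Jsym x y - qf 2 Jsym y x" .
    qed
  qed
  show ?thesis unfolding CM_def using rs pd ge by simp
qed

lemma CM1_YA: "CM 1 YA"
proof (rule CM1_of)
  show "YA 1 0 = YA 0 1" unfolding YA_def by simp
  show "YA 0 0 > 0" unfolding YA_def using aa_pos by simp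
  have h: "(207 + 860*aa) * (-153 + 740*aa) - (-180 - 60*aa) * (-180 - 60*aa) = 625681" using aa_sq by algebra
  have "YA 0 0 * YA 1 1 - YA 0 1 * YA 0 1 = ((207 + 860*aa) * (-153 + 740*aa) - (-180 - 60*aa) * (-180 - 60*aa)) / 625681"
    unfolding YA_def by (simp add: field_simps)
  then show "YA 0 0 * YA 1 1 - YA 0 1 * YA 0 1 \<ge> 1" using h by simp
qed

lemma rsym_gam: "rsym 6 (gam a1 a2)"
  unfolding rsym_def gam_def gam0_def by auto

lemma bisepA:
  assumes a1: "a1 > 0" and a2: "a2 > 0"
    and hk: "a1 * a2 / (a1 * a2 + a2 + 5 * a1) \<ge> 81/1240 + 3/124 * aa"
  shows "bisep 0 (gam a1 a2)"
proof (rule schur_bisep)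
  show "(0::nat) < 3" by simp
  show "rsym 6 (gam a1 a2)" by (rule rsym_gam)
  show "CM 1 YA" by (rule CM1_YA)
  show "0 \<le> qf 6 (Mx 0 YA (gam a1 a2)) X X + qf 6 (Mx 0 YA (gam a1 a2)) Y Y + qf 6 (Kx 0) X Y - qf 6 (Kx 0) Y X" for X Y
    using keyA[OF a1 a2 hk, of X Y] unfolding rf_def .
  show "\<exists>p<4. gam a1 a2 (ridx 0 p) (2*0) * z0 + gam a1 a2 (ridx 0 p) (2*0+1) * z1 \<noteq> 0"
    if "z0 \<noteq> 0 \<or> z1 \<noteq> 0" for z0 z1
  proof (cases "z1 = 0")
    case True
    then have "gam a1 a2 (ridx 0 3) 0 * z0 + gam a1 a2 (ridx 0 3) 1 * z1 \<noteq> 0"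
      using that a2 by (simp add: ridx_def gam_def gam0_def pt1_def pt2_def)
    then show ?thesis by (intro exI[of _ 3]) simp
  next
    case False
    then have "gam a1 a2 (ridx 0 2) 0 * z0 + gam a1 a2 (ridx 0 2) 1 * z1 \<noteq> 0"
      using a1 by (simp add: ridx_def gam_def gam0_def pt1_def pt2_def)
    then show ?thesis by (intro exI[of _ 2]) simp
  qed
qed

lemma Cpart_opt:
  fixes a1 a2 br bi D :: real and X Y :: "nat \<Rightarrow> real"
  assumes a1: "a1 \<ge> 0" and a2: "a2 \<ge> 0"
    and D: "D = a1 * a2 + a2 + 5 * a1"
    and hl: "lr X Y = br" and hi: "li X Y = bi"
    and x5: "X 5 = a1 * (2 * br - bi) / D - (X 0 - X 2)"
    and y5: "Y 5 = a1 * (br + 2 * bi) / D - (Y 0 - Y 2)"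
    and x4: "X 4 = a1 * a2 * br / D + Y 5"
    and y4: "Y 4 = a1 * a2 * bi / D - X 5"
  shows "Cpart a1 a2 X Y = a1 * a2 * (br^2 + bi^2) / D"
proof -
  define s0r where "s0r = a1 * a2 * br / D"
  define s0i where "s0i = a1 * a2 * bi / D"
  define s2r where "s2r = a1 * (2 * br - bi) / D"
  define s2i where "s2i = a1 * (br + 2 * bi) / D"
  have z0r: "X 4 - Y 5 = s0r" using x4 s0r_def by simp
  have z0i: "Y 4 + X 5 = s0i" using y4 s0i_def by simp
  have z2r: "X 0 - X 2 + X 5 = s2r" using x5 s2r_def by simp
  have z2i: "Y 0 - Y 2 + Y 5 = s2i" using y5 s2i_def by simp
  have z1r: "X 1 + X 3 + X 4 + 2 * X 5 = s0r + 2 * s2r + s2i - br"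
    using hl x4 x5 y5 unfolding lr_def s0r_def s2r_def s2i_def by simp
  have z1i: "Y 1 + Y 3 + Y 4 + 2 * Y 5 = s0i + 2 * s2i - s2r - bi"
    using hi y4 x5 y5 unfolding li_def s0i_def s2r_def s2i_def by simp
  have C: "Cpart a1 a2 X Y = s0r^2 + s0i^2 + a1 * ((s0r + 2 * s2r + s2i - br)^2 + (s0i + 2 * s2i - s2r - bi)^2)
       + a2 * (s2r^2 + s2i^2)"
    unfolding Cpart_def z0r z0i z2r z2i z1r z1i by simp
  show ?thesis
  proof (cases "D = 0")
    case True
    then have "a1 = 0" "a2 = 0" using a1 a2 D by (auto simp: add_nonneg_eq_0_iff)
    then show ?thesis unfolding C s0r_def s0i_def s2r_def s2i_def using True by simp
  next
    case False
    have e1: "s0r + 2 * s2r + s2i - br = - a2 * br / D"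
      unfolding s0r_def s2r_def s2i_def using False by (simp add: field_simps) (insert D, algebra)
    have e2: "s0i + 2 * s2i - s2r - bi = - a2 * bi / D"
      unfolding s0i_def s2r_def s2i_def using False by (simp add: field_simps) (insert D, algebra)
    show ?thesis unfolding C e1 e2 unfolding s0r_def s0i_def s2r_def s2i_def using False
      by (simp add: field_simps power2_eq_square) (insert D, algebra)
  qed
qed

lemma kappa_bound:
  assumes a1: "a1 \<ge> 0" and a2: "a2 \<ge> 0" and H: "ge_iK 6 (gam a1 a2) (Jtilde 0)"
  shows "a1 * a2 / (a1 * a2 + a2 + 5 * a1) \<ge> 81/1240 + 3/124 * aa"
proof -
  define br where "br = -2248 + 2440 * aa"
  define bi where "bi = -876 + 3080 * aa"
  define D where "D = a1 * a2 + a2 + 5 * a1"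
  define x0 where "x0 = 24 + 180 * aa"
  define y0 where "y0 = -207 + 860 * aa"
  define X5v where "X5v = a1 * (2 * br - bi) / D - 2 * x0"
  define Y5v where "Y5v = a1 * (br + 2 * bi) / D - 2 * y0"
  define X4v where "X4v = a1 * a2 * br / D + Y5v"
  define Y4v where "Y4v = a1 * a2 * bi / D - X5v"
  define X :: "nat \<Rightarrow> real" where "X i = (if i = 0 then x0 else if i = 1 then 965 else if i = 2 then - x0
     else if i = 3 then 965 else if i = 4 then X4v else X5v)" for i
  define Y :: "nat \<Rightarrow> real" where "Y i = (if i = 0 then y0 else if i = 1 then 0 else if i = 2 then - y0
     else if i = 3 then 0 else if i = 4 then Y4v else Y5v)" for i
  have C: "Cpart a1 a2 X Y = a1 * a2 * (br^2 + bi^2) / D"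
  proof (rule Cpart_opt[OF a1 a2 D_def])
    show "lr X Y = br" unfolding lr_def X_def Y_def br_def x0_def y0_def by simp
    show "li X Y = bi" unfolding li_def X_def Y_def bi_def x0_def y0_def by simp
    show "X 5 = a1 * (2 * br - bi) / D - (X 0 - X 2)" unfolding X_def X5v_def by simp
    show "Y 5 = a1 * (br + 2 * bi) / D - (Y 0 - Y 2)" unfolding Y_def Y5v_def by simp
    show "X 4 = a1 * a2 * br / D + Y 5" unfolding X_def Y_def X4v_def by simp
    show "Y 4 = a1 * a2 * bi / D - X 5" unfolding X_def Y_def Y4v_def by simp
  qed
  have R: "rf 4 gam0 (Jtilde 0) X Y = -1047990 + 521100 * aa"
    unfolding rf_def qf_def sum4
    apply (simp add: X_def Y_def Jtilde_def gam0_def Jsym_def J1_def cc_def x0_def y0_def)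
    using aa_sq by algebra
  have "0 \<le> rf 6 (gam a1 a2) (Jtilde 0) X Y" unfolding rf_def by (rule ge_iK_real[OF H])
  also have "\<dots> = -1047990 + 521100 * aa + a1 * a2 / D * (br^2 + bi^2)"
    unfolding decomp_Jt0 R C by simp
  finally have h: "0 \<le> -1047990 + 521100 * aa + a1 * a2 / D * (br^2 + bi^2)" .
  have B: "br^2 + bi^2 = 22650480 - 16366400 * aa" unfolding br_def bi_def using aa_sq by algebra
  have Bpos: "br^2 + bi^2 > 0" unfolding B using aa_ub by simp
  have A: "-1047990 + 521100 * aa = - ((81/1240 + 3/124 * aa) * (br^2 + bi^2))" unfolding B using aa_sq by algebra
  have "(81/1240 + 3/124 * aa) * (br^2 + bi^2) \<le> a1 * a2 / D * (br^2 + bi^2)" using h unfolding A by linarith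
  then have "(81/1240 + 3/124 * aa) * (br^2 + bi^2) \<le> (a1 * a2 / D) * (br^2 + bi^2)" by simp
  then have "81/1240 + 3/124 * aa \<le> a1 * a2 / D" using Bpos by (rule mult_right_le_imp_le)
  then show ?thesis unfolding D_def .
qed

definition YB :: rmat where
  "YB i j = (if i = 0 \<and> j = 0 then (153 + 740*aa)/791 else if i = 1 \<and> j = 1 then (-207 + 860*aa)/791
      else if (i = 0 \<and> j = 1) \<or> (i = 1 \<and> j = 0) then (180 - 60*aa)/791 else 0)"

lemma wB_lhs:
  "rf 4 (\<lambda>i j. gam0 i j - (if i div 2 = 1 \<and> j div 2 = 1 then YB (i mod 2) (j mod 2) else 0)) (Kx 1) X Y
     + (1/20) * ((2 * X 0 - 2 * X 2 - X 1 - X 3 + Y 0 - Y 2)^2 + (2 * Y 0 - 2 * Y 2 - Y 1 - Y 3 - X 0 + X 2)^2)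
   = ((1/4) + 1*aa)*X 0*X 0 + (-1/5)*X 0*X 1 + (1/10)*X 0*X 2 + (-1/5)*X 0*X 3 + (-19/10)*X 0*Y 1 + (1/10)*X 0*Y 3 + ((1/20) + 1*aa)*X 1*X 1 + (1/5)*X 1*X 2 + (-1/2)*X 1*X 3 + (19/10)*X 1*Y 0 + (1/10)*X 1*Y 2 + ((179/3164) + (51/791)*aa)*X 2*X 2 + ((-1009/3955) + (120/791)*aa)*X 2*X 3 + (-1/10)*X 2*Y 1 + (-1/10)*X 2*Y 3 + ((4931/15820) + (-69/791)*aa)*X 3*X 3 + (-1/10)*X 3*Y 0 + (1/10)*X 3*Y 2 + ((1/4) + 1*aa)*Y 0*Y 0 + (-1/5)*Y 0*Y 1 + (1/10)*Y 0*Y 2 + (-1/5)*Y 0*Y 3 + ((1/20) + 1*aa)*Y 1*Y 1 + (1/5)*Y 1*Y 2 + (-1/2)*Y 1*Y 3 + ((179/3164) + (51/791)*aa)*Y 2*Y 2 + ((-1009/3955) + (120/791)*aa)*Y 2*Y 3 + ((4931/15820) + (-69/791)*aa)*Y 3*Y 3"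
  apply (simp add: rf_def qf_def sum4 Kx_def gam0_def YB_def Jsym_def J1_def cc_def power2_eq_square)
  by (simp add: field_simps)

lemma wB_rhs:
  "((1/4) + 1*aa)*X 0*X 0 + (-1/5)*X 0*X 1 + (1/10)*X 0*X 2 + (-1/5)*X 0*X 3 + (-19/10)*X 0*Y 1 + (1/10)*X 0*Y 3 + ((1/20) + 1*aa)*X 1*X 1 + (1/5)*X 1*X 2 + (-1/2)*X 1*X 3 + (19/10)*X 1*Y 0 + (1/10)*X 1*Y 2 + ((179/3164) + (51/791)*aa)*X 2*X 2 + ((-1009/3955) + (120/791)*aa)*X 2*X 3 + (-1/10)*X 2*Y 1 + (-1/10)*X 2*Y 3 + ((4931/15820) + (-69/791)*aa)*X 3*X 3 + (-1/10)*X 3*Y 0 + (1/10)*X 3*Y 2 + ((1/4) + 1*aa)*Y 0*Y 0 + (-1/5)*Y 0*Y 1 + (1/10)*Y 0*Y 2 + (-1/5)*Y 0*Y 3 + ((1/20) + 1*aa)*Y 1*Y 1 + (1/5)*Y 1*Y 2 + (-1/2)*Y 1*Y 3 + ((179/3164) + (51/791)*aa)*Y 2*Y 2 + ((-1009/3955) + (120/791)*aa)*Y 2*Y 3 + ((4931/15820) + (-69/791)*aa)*Y 3*Y 3 = herm2 ((1/4) + 1*aa) ((1/20) + 1*aa) (-1/10) (19/20) (1*X 0 + ((23/62) + (-10/31)*aa)*X 2 + ((-27/62) + (5/31)*aa)*X 3 + ((-19/62) + (15/31)*aa)*Y 2 + ((61/62) + (-40/31)*aa)*Y 3) (((19/62)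 + (-15/31)*aa)*X 2 + ((-61/62) + (40/31)*aa)*X 3 + 1*Y 0 + ((23/62) + (-10/31)*aa)*Y 2 + ((-27/62) + (5/31)*aa)*Y 3) (1*X 1 + ((27/62) + (-5/31)*aa)*X 2 + ((-77/62) + (20/31)*aa)*X 3 + ((23/62) + (-10/31)*aa)*Y 2 + ((-19/62) + (15/31)*aa)*Y 3) (((-23/62) + (10/31)*aa)*X 2 + ((19/62) + (-15/31)*aa)*X 3 + 1*Y 1 + ((27/62) + (-5/31)*aa)*Y 2 + ((-77/62) + (20/31)*aa)*Y 3) + herm2 ((-2361/98084) + (5535/49042)*aa) ((-44889/490420) + (7587/49042)*aa) ((8271/245210) + (-513/24521)*aa) ((81/620) + (-3/62)*aa) (X 2) (Y 2) (X 3) (Y 3) + (aa * aa - 109/100) * (((20/31)*X 0*X 2 + (-10/31)*X 0*X 3 + (-30/31)*X 0*Y 2 + (80/31)*X 0*Y 3 + (10/31)*X 1*X 2 + (-40/31)*X 1*X 3 + (20/31)*X 1*Y 2 + (-30/31)*X 1*Y 3 + (440/961)*X 2*X 2 + (-1760/961)*X 2*X 3 + (30/31)*X 2*Y 0 + (-20/31)*X 2*Y 1 + (880/961)*X 2*Y 3 + (2200/961)*X 3*X 3 + (-80/31)*X 3*Y 0 + (30/31)*X 3*Y 1 + (-880/961)*X 3*Y 2 + (20/31)*Y 0*Y 2 + (-10/31)*Y 0*Y 3 + (10/31)*Y 1*Y 2 + (-40/31)*Y 1*Y 3 + (440/961)*Y 2*Y 2 + (-1760/961)*Y 2*Y 3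 + (2200/961)*Y 3*Y 3) + aa * ((-450/961)*X 2*X 2 + (1800/961)*X 2*X 3 + (-900/961)*X 2*Y 3 + (-2250/961)*X 3*X 3 + (900/961)*X 3*Y 2 + (-450/961)*Y 2*Y 2 + (1800/961)*Y 2*Y 3 + (-2250/961)*Y 3*Y 3))"
  unfolding herm2_def by algebra

lemma wB_id:
  "rf 4 (\<lambda>i j. gam0 i j - (if i div 2 = 1 \<and> j div 2 = 1 then YB (i mod 2) (j mod 2) else 0)) (Kx 1) X Y
     + (1/20) * ((2 * X 0 - 2 * X 2 - X 1 - X 3 + Y 0 - Y 2)^2 + (2 * Y 0 - 2 * Y 2 - Y 1 - Y 3 - X 0 + X 2)^2)
   = herm2 ((1/4) + 1*aa) ((1/20) + 1*aa) (-1/10) (19/20) (1*X 0 + ((23/62) + (-10/31)*aa)*X 2 + ((-27/62) + (5/31)*aa)*X 3 + ((-19/62) + (15/31)*aa)*Y 2 + ((61/62) + (-40/31)*aa)*Y 3) (((19/62) + (-15/31)*aa)*X 2 + ((-61/62) + (40/31)*aa)*X 3 + 1*Y 0 + ((23/62) + (-10/31)*aa)*Y 2 + ((-27/62) + (5/31)*aa)*Y 3) (1*X 1 + ((27/62) + (-5/31)*aa)*X 2 + ((-77/62) + (20/31)*aa)*X 3 + ((23/62) + (-10/31)*aa)*Y 2 + ((-19/62) + (15/31)*aa)*Y 3) (((-23/62) + (10/31)*aa)*X 2 + ((19/62) + (-15/31)*aa)*X 3 + 1*Y 1 + ((27/62) + (-5/31)*aa)*Y 2 + ((-77/62) + (20/31)*aa)*Y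 3) + herm2 ((-2361/98084) + (5535/49042)*aa) ((-44889/490420) + (7587/49042)*aa) ((8271/245210) + (-513/24521)*aa) ((81/620) + (-3/62)*aa) (X 2) (Y 2) (X 3) (Y 3)"
  unfolding wB_lhs wB_rhs using aa_sq by simp

lemma CM1_YB: "CM 1 YB"
proof (rule CM1_of)
  show "YB 1 0 = YB 0 1" unfolding YB_def by simp
  show "YB 0 0 > 0" unfolding YB_def using aa_pos by simp
  have h: "(153 + 740*aa) * (-207 + 860*aa) - (180 - 60*aa) * (180 - 60*aa) = 625681" using aa_sq by algebra
  have "YB 0 0 * YB 1 1 - YB 0 1 * YB 0 1 = ((153 + 740*aa) * (-207 + 860*aa) - (180 - 60*aa) * (180 - 60*aa)) / 625681"
    unfolding YB_def by (simp add: field_simps)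
  then show "YB 0 0 * YB 1 1 - YB 0 1 * YB 0 1 \<ge> 1" using h by simp
qed

lemma keyB:
  assumes a1: "a1 > 0" and a2: "a2 > 0"
    and hk: "a1 * a2 / (a1 * a2 + a2 + 5 * a1) \<ge> 1/20"
  shows "0 \<le> rf 6 (Mx 1 YB (gam a1 a2)) (Kx 1) X Y"
proof -
  have L: "0 \<le> (lr X Y)^2 + (li X Y)^2" by simp
  have "(1/20) * ((lr X Y)^2 + (li X Y)^2) \<le> a1 * a2 / (a1 * a2 + a2 + 5 * a1) * ((lr X Y)^2 + (li X Y)^2)"
    using hk L by (rule mult_right_mono)
  also have "\<dots> \<le> Cpart a1 a2 X Y" by (rule CS[OF a1 a2])
  finally have c: "(1/20) * ((lr X Y)^2 + (li X Y)^2) \<le> Cpart a1 a2 X Y" .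
  have h1: "0 \<le> herm2 ((1/4) + 1*aa) ((1/20) + 1*aa) (-1/10) (19/20) w0r w0i w1r w1i" for w0r w0i w1r w1i
  proof (rule herm2_nonneg)
    show "0 < (1/4) + 1*aa" using aa_pos by simp
    have "((1/4) + 1*aa) * ((1/20) + 1*aa) - (-1/10)^2 - (19/20)^2 = 19/100 + 3/10 * aa" using aa_sq by algebra
    then show "0 \<le> ((1/4) + 1*aa) * ((1/20) + 1*aa) - (-1/10)^2 - (19/20)^2" using aa_pos by simp
  qed
  have h2: "0 \<le> herm2 ((-2361/98084) + (5535/49042)*aa) ((-44889/490420) + (7587/49042)*aa) ((8271/245210) + (-513/24521)*aa) ((81/620) + (-3/62)*aa) w0r w0i w1r w1i" for w0r w0i w1r w1i
  proof (rule herm2_nonneg)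
    show "0 < (-2361/98084) + (5535/49042)*aa" using aa_lb by simp
    have "((-2361/98084) + (5535/49042)*aa) * ((-44889/490420) + (7587/49042)*aa) - ((8271/245210) + (-513/24521)*aa)^2 - ((81/620) + (-3/62)*aa)^2 = 0"
      using aa_sq by algebra
    then show "0 \<le> ((-2361/98084) + (5535/49042)*aa) * ((-44889/490420) + (7587/49042)*aa) - ((8271/245210) + (-513/24521)*aa)^2 - ((81/620) + (-3/62)*aa)^2"
      by simp
  qed
  have h: "0 \<le> rf 4 (\<lambda>i j. gam0 i j - (if i div 2 = 1 \<and> j div 2 = 1 then YB (i mod 2) (j mod 2) else 0)) (Kx 1) X Y
     + (1/20) * ((lr X Y)^2 + (li X Y)^2)"
    unfolding lr_def li_def wB_id using h1 h2 by (rule add_nonneg_nonneg)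
  have d: "rf 6 (Mx 1 YB (gam a1 a2)) (Kx 1) X Y
    = rf 4 (\<lambda>i j. gam0 i j - (if i div 2 = 1 \<and> j div 2 = 1 then YB (i mod 2) (j mod 2) else 0)) (Kx 1) X Y
      + Cpart a1 a2 X Y" by (rule decomp_Kx) simp
  show ?thesis unfolding d using h c by linarith
qed

lemma bisepB:
  assumes a1: "a1 > 0" and a2: "a2 > 0"
    and hk: "a1 * a2 / (a1 * a2 + a2 + 5 * a1) \<ge> 1/20"
  shows "bisep 1 (gam a1 a2)"
proof (rule schur_bisep)
  show "(1::nat) < 3" by simp
  show "rsym 6 (gam a1 a2)" by (rule rsym_gam)
  show "CM 1 YB" by (rule CM1_YB)
  show "0 \<le> qf 6 (Mx 1 YB (gam a1 a2)) X X + qf 6 (Mx 1 YB (gam a1 a2)) Y Y + qf 6 (Kx 1) X Y - qf 6 (Kx 1) Y X" for X Y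
    using keyB[OF a1 a2 hk, of X Y] unfolding rf_def .
  show "\<exists>p<4. gam a1 a2 (ridx 1 p) (2*1) * z0 + gam a1 a2 (ridx 1 p) (2*1+1) * z1 \<noteq> 0"
    if "z0 \<noteq> 0 \<or> z1 \<noteq> 0" for z0 z1
  proof (cases "z1 = 0")
    case True
    then have "gam a1 a2 (ridx 1 3) 2 * z0 + gam a1 a2 (ridx 1 3) 3 * z1 \<noteq> 0"
      using that a2 by (simp add: ridx_def gam_def gam0_def pt1_def pt2_def)
    then show ?thesis by (intro exI[of _ 3]) simp
  next
    case False
    then have "gam a1 a2 (ridx 1 2) 2 * z0 + gam a1 a2 (ridx 1 2) 3 * z1 \<noteq> 0"
      using a1 by (simp add: ridx_def gam_def gam0_def pt1_def pt2_def)
    then show ?thesis by (intro exI[of _ 2]) simp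
  qed
qed

lemma tr_bound:
  assumes g: "CM 1 g" and p: "p > 0" and d: "d \<ge> 0" and dd: "d * d \<le> p * r - q * q"
  shows "p * g 0 0 + 2 * q * g 0 1 + r * g 1 1 \<ge> 2 * d"
proof -
  have s: "g 1 0 = g 0 1" using g unfolding CM_def rsym_def by auto
  have ge: "ge_iK 2 g Jsym" using g unfolding CM_def by simp
  have R: "0 \<le> g 0 0 * (x 0 * x 0 + y 0 * y 0) + 2 * g 0 1 * (x 0 * x 1 + y 0 * y 1) + g 1 1 * (x 1 * x 1 + y 1 * y 1)
           - 2 * x 0 * y 1 + 2 * x 1 * y 0" for x y :: "nat \<Rightarrow> real"
    using ge_iK_real[OF ge, of x y] unfolding qf_def sum2 Jsym_def J1_def using s by (simp add: algebra_simps)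
  have g11: "g 1 1 \<ge> 0" using R[of "\<lambda>i. if i = 0 then 0 else 1" "\<lambda>i. 0"] by simp
  have h: "0 \<le> g 0 0 * (p * p) + 2 * g 0 1 * (p * q) + g 1 1 * (q * q + d * d) - 2 * p * d"
    using R[of "\<lambda>i. if i = 0 then p else q" "\<lambda>i. if i = 0 then 0 else d"] by simp
  have "g 1 1 * (d * d) \<le> g 1 1 * (p * r - q * q)" using dd g11 by (rule mult_left_mono)
  then have "0 \<le> p * (p * g 0 0 + 2 * q * g 0 1 + r * g 1 1 - 2 * d)"
    using h by (simp add: algebra_simps)
  then show ?thesis using p by (simp add: zero_le_mult_iff)
qed

definition vec6 :: "real \<Rightarrow> real \<Rightarrow> real \<Rightarrow> real \<Rightarrow> real \<Rightarrow> real \<Rightarrow> nat \<Rightarrow> real" where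
  "vec6 c0 c1 c2 c3 c4 c5 i = (if i = 0 then c0 else if i = 1 then c1 else if i = 2 then c2 else if i = 3 then c3
      else if i = 4 then c4 else c5)"

lemma not_fully_sep: "\<not> fully_sep (gam a1 a2)"
proof
  assume "fully_sep (gam a1 a2)"
  then obtain gs where cm: "\<forall>m<3. CM 1 (gs m)"
    and ps: "psd_r 6 (\<lambda>i j. gam a1 a2 i j - (if i div 2 = j div 2 then gs (i div 2) (i mod 2) (j mod 2) else 0))"
    unfolding fully_sep_def by blast
  define Mf where "Mf = (\<lambda>i j. gam a1 a2 i j - (if i div 2 = j div 2 then gs (i div 2) (i mod 2) (j mod 2) else 0))"
  have cm0: "CM 1 (gs 0)" and cm1: "CM 1 (gs 1)" and cm2: "CM 1 (gs 2)" using cm by auto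
  have s: "gs m 1 0 = gs m 0 1" if "m < 3" for m using cm that unfolding CM_def rsym_def by auto
  have q: "0 \<le> qf 6 Mf v v" for v using ps unfolding psd_r_qf Mf_def by blast
have f0: "qf 6 Mf (vec6 (9/20) (-17/20) (1) (-1/4) (0) (11/20)) (vec6 (9/20) (-17/20) (1) (-1/4) (0) (11/20)) = (89/200) + (159/80) * aa - ((81/400) * gs 0 0 0 + (-153/400) * (gs 0 0 1 + gs 0 1 0) + (289/400) * gs 0 1 1 + (1) * gs 1 0 0 + (-1/4) * (gs 1 0 1 + gs 1 1 0) + (1/16) * gs 1 1 1 + (0) * gs 2 0 0 + (0) * (gs 2 0 1 + gs 2 1 0) + (121/400) * gs 2 1 1)"
    unfolding qf_def sum6 Mf_def gam_def gam0_def pt1_def pt2_def vec6_def cc_def by (simp add: field_simps)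
  have e0: "0 \<le> qf 6 Mf (vec6 (9/20) (-17/20) (1) (-1/4) (0) (11/20)) (vec6 (9/20) (-17/20) (1) (-1/4) (0) (11/20))" by (rule q)
  have f1: "qf 6 Mf (vec6 (273/331) (1) (0) (435/331) (-220/331) (-273/331)) (vec6 (273/331) (1) (0) (435/331) (-220/331) (-273/331)) = (36538/109561) + (373315/109561) * aa - ((74529/109561) * gs 0 0 0 + (273/331) * (gs 0 0 1 + gs 0 1 0) + (1) * gs 0 1 1 + (0) * gs 1 0 0 + (0) * (gs 1 0 1 + gs 1 1 0) + (189225/109561) * gs 1 1 1 + (48400/109561) * gs 2 0 0 + (60060/109561) * (gs 2 0 1 + gs 2 1 0) + (74529/109561) * gs 2 1 1)"
    unfolding qf_def sum6 Mf_def gam_def gam0_def pt1_def pt2_def vec6_def cc_def by (simp add: field_simps)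
  have e1: "0 \<le> qf 6 Mf (vec6 (273/331) (1) (0) (435/331) (-220/331) (-273/331)) (vec6 (273/331) (1) (0) (435/331) (-220/331) (-273/331))" by (rule q)
  have f2: "qf 6 Mf (vec6 (765/386) (0) (0) (1) (572/193) (-765/386)) (vec6 (765/386) (0) (0) (1) (572/193) (-765/386)) = (1893961/148996) + (734221/148996) * aa - ((585225/148996) * gs 0 0 0 + (0) * (gs 0 0 1 + gs 0 1 0) + (0) * gs 0 1 1 + (0) * gs 1 0 0 + (0) * (gs 1 0 1 + gs 1 1 0) + (1) * gs 1 1 1 + (327184/37249) * gs 2 0 0 + (-218790/37249) * (gs 2 0 1 + gs 2 1 0) + (585225/148996) * gs 2 1 1)"
    unfolding qf_def sum6 Mf_def gam_def gam0_def pt1_def pt2_def vec6_def cc_def by (simp add: field_simps)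
  have e2: "0 \<le> qf 6 Mf (vec6 (765/386) (0) (0) (1) (572/193) (-765/386)) (vec6 (765/386) (0) (0) (1) (572/193) (-765/386))" by (rule q)
  have f3: "qf 6 Mf (vec6 (1/2) (0) (0) (0) (1) (-1/2)) (vec6 (1/2) (0) (0) (0) (1) (-1/2)) = (5/4) + (1/4) * aa - ((1/4) * gs 0 0 0 + (0) * (gs 0 0 1 + gs 0 1 0) + (0) * gs 0 1 1 + (0) * gs 1 0 0 + (0) * (gs 1 0 1 + gs 1 1 0) + (0) * gs 1 1 1 + (1) * gs 2 0 0 + (-1/2) * (gs 2 0 1 + gs 2 1 0) + (1/4) * gs 2 1 1)"
    unfolding qf_def sum6 Mf_def gam_def gam0_def pt1_def pt2_def vec6_def cc_def by (simp add: field_simps)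
  have e3: "0 \<le> qf 6 Mf (vec6 (1/2) (0) (0) (0) (1) (-1/2)) (vec6 (1/2) (0) (0) (0) (1) (-1/2))" by (rule q)
  have t0: "43/40 * gs 0 0 0 + 2 * (3/10) * gs 0 0 1 + 31/20 * gs 0 1 1 \<ge> 2 * (251/200)"
    by (rule tr_bound[OF cm0]) auto
  have t1: "1 * gs 1 0 0 + 2 * (-1/4) * gs 1 0 1 + 31/20 * gs 1 1 1 \<ge> 2 * (1219/1000)"
    by (rule tr_bound[OF cm1]) auto
  have t2: "6/5 * gs 2 0 0 + 2 * (-1/20) * gs 2 0 1 + 47/40 * gs 2 1 1 \<ge> 2 * (593/500)"
    by (rule tr_bound[OF cm2]) auto
  have ss: "gs 0 1 0 = gs 0 0 1" "gs 1 1 0 = gs 1 0 1" "gs 2 1 0 = gs 2 0 1" using s by auto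
  have sumeq: "(1) * qf 6 Mf (vec6 (9/20) (-17/20) (1) (-1/4) (0) (11/20)) (vec6 (9/20) (-17/20) (1) (-1/4) (0) (11/20)) + (331/400) * qf 6 Mf (vec6 (273/331) (1) (0) (435/331) (-220/331) (-273/331)) (vec6 (273/331) (1) (0) (435/331) (-220/331) (-273/331)) + (193/3310) * qf 6 Mf (vec6 (765/386) (0) (0) (1) (572/193) (-765/386)) (vec6 (765/386) (0) (0) (1) (572/193) (-765/386)) + (311/965) * qf 6 Mf (vec6 (1/2) (0) (0) (0) (1) (-1/2)) (vec6 (1/2) (0) (0) (0) (1) (-1/2)) = 373/200 + 207/40 * aa - ((43/40 * gs 0 0 0 + 2 * (3/10) * gs 0 0 1 + 31/20 * gs 0 1 1)
      + (1 * gs 1 0 0 + 2 * (-1/4) * gs 1 0 1 + 31/20 * gs 1 1 1) + (6/5 * gs 2 0 0 + 2 * (-1/20) * gs 2 0 1 + 47/40 * gs 2 1 1))"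
    unfolding f0 f1 f2 f3 ss by (simp add: field_simps)
  have "0 \<le> (1) * qf 6 Mf (vec6 (9/20) (-17/20) (1) (-1/4) (0) (11/20)) (vec6 (9/20) (-17/20) (1) (-1/4) (0) (11/20)) + (331/400) * qf 6 Mf (vec6 (273/331) (1) (0) (435/331) (-220/331) (-273/331)) (vec6 (273/331) (1) (0) (435/331) (-220/331) (-273/331)) + (193/3310) * qf 6 Mf (vec6 (765/386) (0) (0) (1) (572/193) (-765/386)) (vec6 (765/386) (0) (0) (1) (572/193) (-765/386)) + (311/965) * qf 6 Mf (vec6 (1/2) (0) (0) (0) (1) (-1/2)) (vec6 (1/2) (0) (0) (0) (1) (-1/2))" using e0 e1 e2 e3 by simp
  then show False using sumeq t0 t1 t2 aa_ub by linarith
qed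

lemma gC_lhs:
  "rf 4 gam0 Jsym X Y = (1*aa)*X 0*X 0 + (3/5)*X 0*X 2 + (-2)*X 0*Y 1 + (1*aa)*X 1*X 1 + (-3/5)*X 1*X 3 + 2*X 1*Y 0 + (1*aa)*X 2*X 2 + (-2)*X 2*Y 3 + (1*aa)*X 3*X 3 + 2*X 3*Y 2 + (1*aa)*Y 0*Y 0 + (3/5)*Y 0*Y 2 + (1*aa)*Y 1*Y 1 + (-3/5)*Y 1*Y 3 + (1*aa)*Y 2*Y 2 + (1*aa)*Y 3*Y 3"
  by (simp add: rf_def qf_def sum4 gam0_def Jsym_def J1_def cc_def power2_eq_square)

lemma gC_rhs:
  "(1*aa)*X 0*X 0 + (3/5)*X 0*X 2 + (-2)*X 0*Y 1 + (1*aa)*X 1*X 1 + (-3/5)*X 1*X 3 + 2*X 1*Y 0 + (1*aa)*X 2*X 2 + (-2)*X 2*Y 3 + (1*aa)*X 3*X 3 + 2*X 3*Y 2 + (1*aa)*Y 0*Y 0 + (3/5)*Y 0*Y 2 + (1*aa)*Y 1*Y 1 + (-3/5)*Y 1*Y 3 + (1*aa)*Y 2*Y 2 + (1*aa)*Y 3*Y 3 = herm2 (1*aa) (1*aa) 0 1 (1*X 0 + ((10/3)*aa)*X 2 + (-10/3)*Y 3) ((10/3)*X 3 + 1*Y 0 + ((10/3)*aa)*Y 2) (1*X 1 + ((-10/3)*aa)*X 3 + (-10/3)*Y 2) ((10/3)*X 2 + 1*Y 1 + ((-10/3)*aa)*Y 3) + (aa * aa - 109/100) * (aa^0 * ((-20/3)*X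 0*X 2 + (20/3)*X 1*X 3 + (200/9)*X 2*Y 3 + (-200/9)*X 3*Y 2 + (-20/3)*Y 0*Y 2 + (20/3)*Y 1*Y 3) + aa^1 * ((-100/9)*X 2*X 2 + (-100/9)*X 3*X 3 + (-100/9)*Y 2*Y 2 + (-100/9)*Y 3*Y 3))"
  unfolding herm2_def by algebra

lemma gC_id: "rf 4 gam0 Jsym X Y = herm2 (1*aa) (1*aa) 0 1 (1*X 0 + ((10/3)*aa)*X 2 + (-10/3)*Y 3) ((10/3)*X 3 + 1*Y 0 + ((10/3)*aa)*Y 2) (1*X 1 + ((-10/3)*aa)*X 3 + (-10/3)*Y 2) ((10/3)*X 2 + 1*Y 1 + ((-10/3)*aa)*Y 3)"
  unfolding gC_lhs gC_rhs using aa_sq by simp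

lemma CM2_gam0: "CM 2 gam0"
proof -
  have sym: "gam0 i j = gam0 j i" for i j unfolding gam0_def by auto
  have ge: "ge_iK 4 gam0 Jsym"
  proof (subst ge_iK_iff)
    show "\<And>i j. i < 4 \<Longrightarrow> j < 4 \<Longrightarrow> gam0 i j = gam0 j i" by (rule sym)
    show "\<And>i j. i < 4 \<Longrightarrow> j < 4 \<Longrightarrow> Jsym i j = - Jsym j i" unfolding Jsym_def J1_def by auto
    show "\<forall>x y. 0 \<le> qf 4 gam0 x x + qf 4 gam0 y y + qf 4 Jsym x y - qf 4 Jsym y x"
    proof (intro allI)
      fix x y :: "nat \<Rightarrow> real"
      have "qf 4 gam0 x x + qf 4 gam0 y y + qf 4 Jsym x y - qf 4 Jsym y x = rf 4 gam0 Jsym x y" unfolding rf_def by simp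
      also have "\<dots> \<ge> 0" unfolding gC_id
      proof (rule herm2_nonneg)
        show "0 < 1 * aa" using aa_pos by simp
        show "0 \<le> 1 * aa * (1 * aa) - 0^2 - 1^2" using aa_sq by simp
      qed
      finally show "0 \<le> qf 4 gam0 x x + qf 4 gam0 y y + qf 4 Jsym x y - qf 4 Jsym y x" .
    qed
  qed
  show ?thesis unfolding CM_def rsym_def using ge pd4_from_ge_iK sym by auto
qed

lemma CM1_id: "CM 1 (\<lambda>i j. if i = j then 1 else 0)"
  by (rule CM1_of) auto

lemma bisepC: "a1 \<ge> 0 \<Longrightarrow> a2 \<ge> 0 \<Longrightarrow> bisep 2 (gam a1 a2)"
  unfolding bisep_def
proof (intro exI conjI)
  assume a1: "a1 \<ge> 0" and a2: "a2 \<ge> 0"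
  show "CM 1 (\<lambda>i j. if i = j then 1 else 0)" by (rule CM1_id)
  show "CM 2 gam0" by (rule CM2_gam0)
  show "psd_r 6 (\<lambda>i j. gam a1 a2 i j - embed_bip 2 (\<lambda>i j. if i = j then 1 else 0) gam0 i j)"
    unfolding psd_r_qf
  proof
    fix v :: "nat \<Rightarrow> real"
    have "qf 6 (\<lambda>i j. gam a1 a2 i j - embed_bip 2 (\<lambda>i j. if i = j then 1 else 0) gam0 i j) v v
      = a1 * (v 1 + v 3 + v 4 + 2 * v 5)^2 + a2 * (v 0 - v 2 + v 5)^2"
      by (simp add: qf_def sum6 gam_def gam0_def pt1_def pt2_def embed_bip_def rest_idx_def power2_eq_square)
         (simp add: algebra_simps)
    also have "\<dots> \<ge> 0" using a1 a2 by simp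
    finally show "0 \<le> qf 6 (\<lambda>i j. gam a1 a2 i j - embed_bip 2 (\<lambda>i j. if i = j then 1 else 0) gam0 i j) v v" .
  qed
qed

lemma pd_gam: "a1 \<ge> 0 \<Longrightarrow> a2 \<ge> 0 \<Longrightarrow> pd_r 6 (gam a1 a2)"
  unfolding pd_r_qf
proof (intro allI impI)
  fix v :: "nat \<Rightarrow> real"
  assume a1: "a1 \<ge> 0" and a2: "a2 \<ge> 0" and nz: "\<exists>i<6. v i \<noteq> 0"
  have e: "qf 6 (gam a1 a2) v v = (aa - cc) * (v 0 * v 0 + v 1 * v 1 + v 2 * v 2 + v 3 * v 3)
      + cc * ((v 0 + v 2)^2 + (v 1 - v 3)^2) + (v 4 * v 4 + v 5 * v 5)
      + a1 * (v 1 + v 3 + v 4 + 2 * v 5)^2 + a2 * (v 0 - v 2 + v 5)^2"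
    by (simp add: qf_def sum6 gam_def gam0_def pt1_def pt2_def power2_eq_square) (simp add: algebra_simps)
  have ac: "aa - cc > 0" using aa_lb unfolding cc_def by simp
  have S: "0 < (aa - cc) * (v 0 * v 0 + v 1 * v 1 + v 2 * v 2 + v 3 * v 3) + (v 4 * v 4 + v 5 * v 5)"
  proof -
    obtain i where i: "i < 6" "v i \<noteq> 0" using nz by blast
    have sq: "0 < v i * v i" using i by (auto simp: zero_less_mult_iff linorder_neq_iff)
    have nn: "0 \<le> v j * v j" for j by simp
    show ?thesis
    proof (cases "i < 4")
      case True
      then have "0 < v 0 * v 0 + v 1 * v 1 + v 2 * v 2 + v 3 * v 3"
        using i by (intro sumsq_pos4) blast
      then have "0 < (aa - cc) * (v 0 * v 0 + v 1 * v 1 + v 2 * v 2 + v 3 * v 3)" using ac by simp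
      then show ?thesis using nn[of 4] nn[of 5] by linarith
    next
      case False
      then have "i = 4 \<or> i = 5" using i by auto
      then have "0 < v 4 * v 4 + v 5 * v 5" using sq nn[of 4] nn[of 5]
        by (elim disjE) (simp_all add: add_pos_nonneg add_nonneg_pos)
      moreover have "0 \<le> (aa - cc) * (v 0 * v 0 + v 1 * v 1 + v 2 * v 2 + v 3 * v 3)" using ac by simp
      ultimately show ?thesis by linarith
    qed
  qed
  have "0 \<le> cc * ((v 0 + v 2)^2 + (v 1 - v 3)^2)" unfolding cc_def by simp
  moreover have "0 \<le> a1 * (v 1 + v 3 + v 4 + 2 * v 5)^2" using a1 by simp
  moreover have "0 \<le> a2 * (v 0 - v 2 + v 5)^2" using a2 by simp
  ultimately show "0 < qf 6 (gam a1 a2) v v" unfolding e using S by linarith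
qed

theorem mainTheorem14:
  fixes a1 a2 :: real
  assumes "0 \<le> a1" and "0 \<le> a2"
  shows "\<not> fully_sep (gam a1 a2) \<and>
         ((ge_iK 6 (gam a1 a2) Jsym \<and> (\<forall>x<3. ge_iK 6 (gam a1 a2) (Jtilde x)))
            \<longrightarrow> class4 (gam a1 a2))"
proof (intro conjI impI)
  show nfs: "\<not> fully_sep (gam a1 a2)" by (rule not_fully_sep)
  assume H: "ge_iK 6 (gam a1 a2) Jsym \<and> (\<forall>x<3. ge_iK 6 (gam a1 a2) (Jtilde x))"
  have kb: "a1 * a2 / (a1 * a2 + a2 + 5 * a1) \<ge> 81/1240 + 3/124 * aa"
    using kappa_bound[OF assms] H by simp
  have kpos: "81/1240 + 3/124 * aa > 0" using aa_pos by simp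
  have a1p: "a1 > 0"
  proof (rule ccontr)
    assume "\<not> a1 > 0" then have "a1 = 0" using assms by simp
    then show False using kb kpos by simp
  qed
  have a2p: "a2 > 0"
  proof (rule ccontr)
    assume "\<not> a2 > 0" then have "a2 = 0" using assms by simp
    then show False using kb kpos by simp
  qed
  have kb2: "a1 * a2 / (a1 * a2 + a2 + 5 * a1) \<ge> 1/20" using kb aa_pos by simp
  have bA: "bisep 0 (gam a1 a2)" by (rule bisepA[OF a1p a2p kb])
  have bB: "bisep 1 (gam a1 a2)" by (rule bisepB[OF a1p a2p kb2])
  have bC: "bisep 2 (gam a1 a2)" by (rule bisepC[OF assms])
  have cm: "CM 3 (gam a1 a2)"
    unfolding CM_def using rsym_gam pd_gam[OF assms] H by simp
  have "\<forall>x<3. bisep x (gam a1 a2)"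
  proof (intro allI impI)
    fix x :: nat assume "x < 3"
    then have "x = 0 \<or> x = 1 \<or> x = 2" by (rule lt3_cases)
    then show "bisep x (gam a1 a2)" using bA bB bC by auto
  qed
  then show "class4 (gam a1 a2)" unfolding class4_def using cm nfs by simp
qed

end
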